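(* Let $p\ge2$, $f\in\mathcal H_0$, $u$ the solution of $\partial_tu+\partial J(u)\ni0$, $u(0)=f$, $\lambda:=\lambda_1\|f\|^{p-2}$, $a(t)=(1+(p-2)\lambda t)^{-\frac1{p-2}}$ if $p>2$ and $a(t)=e^{-\lambda t}$ if $p=2$, $w(t):=u(t)/a(t)$ for $t\ge0$, and $\Lambda(t):=pJ(u(t))/\|u(t)\|^p$. If $p>2$, then for every $\delta>0$ $$\frac{\lambda_1\|u(\delta)\|^{p-2}}{\Lambda(\delta)}\le\|w(t)\|^{p-2}\le\|f\|^{p-2},\qquad t\ge\delta,$$ where $\delta=0$ is admissible if $J(f)<\infty$. If $p=2$, then $t\mapsto\|w(t)\|$ is non-increasing and in particular $\|w(t)\|\le\|w(0)\|=\|f\|$ for all $t\ge0$.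
   Context: $\mathcal H$ is a real Hilbert space with inner product $\langle\cdot,\cdot\rangle$ and norm $\|\cdot\|$. $J:\mathcal H\to\mathbb R\cup\{\infty\}$ is convex, lower semicontinuous, proper, with dense effective domain, and absolutely $p$-homogeneous: $J(cu)=|c|^pJ(u)$ for $c\ne0$, $J(0)=0$. Standing coercivity assumption: $\lambda_1:=\inf_{u\in\mathcal H_0}pJ(u)/\|u\|^p>0$. $\partial J(u)=\{\zeta: J(u)+\langle\zeta,v-u\rangle\le J(v)\ \forall v\}$; $\mathcal N(J)=\{u:J(u)=0\}$; $\mathcal H_0:=\mathcal N(J)^\perp\setminus\{0\}$. The gradient flow solution (Brezis) is the unique continuous $u:[0,\infty)\to\mathcal H$, Lipschitz on $[\delta,\infty)$ for all $\delta>0$, right-differentiable on $(0,\infty)$ with $u(0)=f$ and $\partial_t^+u(t)=-\zeta(t)$, $\zeta(t)$ the minimal-norm element of $\partial J(u(t))$. The function $a$ solves $a'=-\lambda a^{p-1}$, $a(0)=1$. *)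

theory Defs
  imports "HOL-Analysis.Analysis"
begin

definition convex_fun :: "('a::real_vector \<Rightarrow> ereal) \<Rightarrow> bool" where
  "convex_fun J \<longleftrightarrow> (\<forall>x y. \<forall>\<theta>::real. 0 \<le> \<theta> \<and> \<theta> \<le> 1 \<longrightarrow>
      J ((1 - \<theta>) *\<^sub>R x + \<theta> *\<^sub>R y) \<le> ereal (1 - \<theta>) * J x + ereal \<theta> * J y)"

definition lsc_fun :: "('a::topological_space \<Rightarrow> ereal) \<Rightarrow> bool" where
  "lsc_fun J \<longleftrightarrow> (\<forall>c. closed {x. J x \<le> c})"

definition proper_fun :: "('a \<Rightarrow> ereal) \<Rightarrow> bool" where
  "proper_fun J \<longleftrightarrow> (\<forall>x. J x \<noteq> -\<infinity>) \<and> (\<exists>x. J x \<noteq> \<infinity>)"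

definition dom_fun :: "('a \<Rightarrow> ereal) \<Rightarrow> 'a set" where
  "dom_fun J = {x. J x < \<infinity>}"

definition abs_homogeneous :: "real \<Rightarrow> ('a::real_vector \<Rightarrow> ereal) \<Rightarrow> bool" where
  "abs_homogeneous p J \<longleftrightarrow> J 0 = 0 \<and>
     (\<forall>c u. c \<noteq> 0 \<longrightarrow> J (c *\<^sub>R u) = ereal (\<bar>c\<bar> powr p) * J u)"

definition subdiff :: "('a::real_inner \<Rightarrow> ereal) \<Rightarrow> 'a \<Rightarrow> 'a set" where
  "subdiff J u = {\<zeta>. \<forall>v. J u + ereal (\<zeta> \<bullet> (v - u)) \<le> J v}"

definition null_set :: "('a \<Rightarrow> ereal) \<Rightarrow> 'a set" where
  "null_set J = {u. J u = 0}"

definition H0 :: "('a::real_inner \<Rightarrow> ereal) \<Rightarrow> 'a set" where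
  "H0 J = {u. \<forall>v\<in>null_set J. u \<bullet> v = 0} - {0}"

definition lambda1 :: "real \<Rightarrow> ('a::real_inner \<Rightarrow> ereal) \<Rightarrow> ereal" where
  "lambda1 p J = (INF u\<in>H0 J. ereal p * J u / ereal (norm u powr p))"

definition min_norm_elem :: "'a::real_normed_vector \<Rightarrow> 'a set \<Rightarrow> bool" where
  "min_norm_elem z S \<longleftrightarrow> z \<in> S \<and> (\<forall>y\<in>S. norm z \<le> norm y)"

text \<open>Brezis gradient-flow solution of  u' + dJ(u) \<ni> 0,  u(0) = f.\<close>
definition gradient_flow :: "('a::real_inner \<Rightarrow> ereal) \<Rightarrow> 'a \<Rightarrow> (real \<Rightarrow> 'a) \<Rightarrow> bool" where
  "gradient_flow J f u \<longleftrightarrow>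
     continuous_on {0..} u \<and>
     (\<forall>\<delta>>0. \<exists>L. L-lipschitz_on {\<delta>..} u) \<and>
     u 0 = f \<and>
     (\<forall>t>0. \<exists>\<zeta>. min_norm_elem \<zeta> (subdiff J (u t)) \<and>
        (u has_vector_derivative - \<zeta>) (at_right t))"

text \<open>The Rayleigh quotient Lambda(t) = p J(u(t)) / norm(u(t))^p (used where J(u(t)) is finite).\<close>
definition rayleigh :: "real \<Rightarrow> ('a::real_normed_vector \<Rightarrow> ereal) \<Rightarrow> 'a \<Rightarrow> real" where
  "rayleigh p J v = p * real_of_ereal (J v) / norm v powr p"

definition a_fun :: "real \<Rightarrow> real \<Rightarrow> real \<Rightarrow> real" where
  "a_fun p lam t = (if p = 2 then exp (- lam * t)
                    else (1 + (p - 2) * lam * t) powr (- 1 / (p - 2)))"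

end

theory Submission
  imports Defs
begin


lemma vderiv_quot:
  fixes u :: "real \<Rightarrow> 'a::real_normed_vector"
  assumes "(u has_vector_derivative D) (at t within {t<..})"
  shows "((\<lambda>s. (1/(s-t)) *\<^sub>R (u s - u t)) \<longlongrightarrow> D) (at_right t)"
proof -
  have "((\<lambda>y. (1/norm(y-t)) *\<^sub>R (u y - (u t + (y-t) *\<^sub>R D))) \<longlongrightarrow> 0) (at t within {t<..})"
    using assms unfolding has_vector_derivative_def has_derivative_within by auto
  then have "((\<lambda>y. (1/norm(y-t)) *\<^sub>R (u y - (u t + (y-t) *\<^sub>R D)) + D) \<longlongrightarrow> 0 + D) (at_right t)"
    by (intro tendsto_intros) auto
  moreover have "\<forall>\<^sub>F y in at_right t. (1/norm(y-t)) *\<^sub>R (u y - (u t + (y-t) *\<^sub>R D)) + D = (1/(y-t)) *\<^sub>R (u y - u t)"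
    unfolding eventually_at_right_field
  proof (rule exI[of _ "t+1"], safe)
    fix y assume y: "t < y" "y < t + 1"
    have e: "1 + t/(y-t) = y/(y-t)" using y by (simp add: field_simps)
    have "D + (t / (y - t)) *\<^sub>R D = (1 + t/(y-t)) *\<^sub>R D" by (simp add: scaleR_add_left)
    then show "(1/norm(y-t)) *\<^sub>R (u y - (u t + (y-t) *\<^sub>R D)) + D = (1/(y-t)) *\<^sub>R (u y - u t)"
      using y e by (simp add: algebra_simps divide_simps)
  qed simp
  ultimately show ?thesis by (auto dest: tendsto_cong[THEN iffD1, rotated])
qed

lemma der_bound:
  fixes F Q :: "real \<Rightarrow> real"
  assumes "(Q \<longlongrightarrow> L) (at_right x)" "L \<le> 0"
    "\<forall>\<^sub>F y in at_right x. F y - F x \<le> (y - x) * Q y" "e > 0"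
  shows "\<exists>d>0. \<forall>y. x < y \<and> y < x + d \<longrightarrow> F y \<le> F x + e * (y - x)"
proof -
  have "\<forall>\<^sub>F y in at_right x. Q y < e"
    using order_tendstoD(2)[OF assms(1), of e] assms by auto
  with assms(3) have "\<forall>\<^sub>F y in at_right x. F y - F x \<le> (y - x) * Q y \<and> Q y < e"
    by (auto intro: eventually_conj)
  then obtain b where b: "b > x" "\<And>y. x < y \<Longrightarrow> y < b \<Longrightarrow> F y - F x \<le> (y - x) * Q y \<and> Q y < e"
    unfolding eventually_at_right_field by auto
  show ?thesis
  proof (intro exI[of _ "b - x"] conjI allI impI)
    fix y assume y: "x < y \<and> y < x + (b - x)"
    then have "F y - F x \<le> (y - x) * Q y" "Q y < e" using b by auto
    moreover have "(y - x) * Q y \<le> (y - x) * e" using y \<open>Q y < e\<close> by (intro mult_left_mono) auto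
    ultimately show "F y \<le> F x + e * (y - x)" by (auto simp: algebra_simps)
  qed (use b in auto)
qed

lemma rc_from_bound:
  fixes F Q :: "real \<Rightarrow> real"
  assumes "(Q \<longlongrightarrow> L) (at_right x)"
    "\<forall>\<^sub>F y in at_right x. F y - F x \<le> (y - x) * Q y" "e > 0"
  shows "\<exists>d>0. \<forall>y. x < y \<and> y < x + d \<longrightarrow> F y \<le> F x + e"
proof -
  have "((\<lambda>y. y - x) \<longlongrightarrow> x - x) (at_right x)"
    by (intro tendsto_intros)
  then have "((\<lambda>y. (y - x) * Q y) \<longlongrightarrow> 0 * L) (at_right x)"
    by (intro tendsto_intros assms) auto
  then have "\<forall>\<^sub>F y in at_right x. (y - x) * Q y < e"
    using order_tendstoD(2)[of _ "0*L" _ e] assms by auto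
  with assms(2) have "\<forall>\<^sub>F y in at_right x. F y - F x \<le> (y - x) * Q y \<and> (y - x) * Q y < e"
    by (auto intro: eventually_conj)
  then obtain b where b: "b > x" "\<And>y. x < y \<Longrightarrow> y < b \<Longrightarrow> F y - F x \<le> (y - x) * Q y \<and> (y - x) * Q y < e"
    unfolding eventually_at_right_field by auto
  show ?thesis
    by (rule exI[of _ "b - x"]) (use b in force)
qed



lemma dini:
  fixes F :: "real \<Rightarrow> real"
  assumes ab: "a \<le> b"
  and lsc: "\<And>x e. a < x \<Longrightarrow> x \<le> b \<Longrightarrow> e > 0 \<Longrightarrow> \<exists>d>0. \<forall>y. a \<le> y \<and> y < x \<and> x - y < d \<longrightarrow> F x - e < F y"
  and rc: "\<And>e. e > 0 \<Longrightarrow> \<exists>d>0. \<forall>y. a < y \<and> y < a + d \<longrightarrow> F y \<le> F a + e"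
  and der: "\<And>x e. a < x \<Longrightarrow> x < b \<Longrightarrow> e > 0 \<Longrightarrow> \<exists>d>0. \<forall>y. x < y \<and> y < x + d \<longrightarrow> F y \<le> F x + e * (y - x)"
  shows "F b \<le> F a"
proof (cases "a = b")
  case True thus ?thesis by simp
next
  case False
  hence ab': "a < b" using ab by simp
  show ?thesis
  proof (rule field_le_epsilon)
    fix E :: real assume E: "E > 0"
    define \<epsilon> where "\<epsilon> = E / (b - a + 1)"
    have \<epsilon>: "\<epsilon> > 0" using ab' E by (simp add: \<epsilon>_def)
    define S where "S = {x. a \<le> x \<and> x \<le> b \<and> F x \<le> F a + \<epsilon>*(x-a) + \<epsilon>}"
    define c where "c = Sup S"
    have aS: "a \<in> S" using \<epsilon> by (simp add: S_def ab)
    have bdd: "bdd_above S" by (auto simp: S_def bdd_above_def)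
    have Sc: "x \<in> S \<Longrightarrow> x \<le> c" for x using cSup_upper[OF _ bdd] c_def by auto
    have cb: "c \<le> b" unfolding c_def using aS by (intro cSup_least) (auto simp: S_def)
    have ac: "a < c"
    proof -
      obtain d where d: "d > 0" "\<forall>y. a < y \<and> y < a + d \<longrightarrow> F y \<le> F a + \<epsilon>" using rc[OF \<epsilon>] by auto
      define y where "y = min (a + d/2) b"
      have y: "a < y" "y < a + d" "y \<le> b" using d ab' by (auto simp: y_def)
      then have "F y \<le> F a + \<epsilon>" using d by auto
      moreover have "0 \<le> \<epsilon>*(y-a)" using y \<epsilon> by simp
      ultimately have "y \<in> S" using y by (simp add: S_def)
      then show ?thesis using Sc \<open>a<y\<close> by force
    qed
    have cS: "c \<in> S"
    proof (rule ccontr)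
      assume "c \<notin> S"
      then have Fc: "F c > F a + \<epsilon>*(c-a) + \<epsilon>" using ac cb by (auto simp: S_def)
      obtain d where d: "d>0" "\<forall>y. a \<le> y \<and> y < c \<and> c - y < d \<longrightarrow> F c - (F c - (F a + \<epsilon>*(c-a) + \<epsilon>)) < F y"
        using lsc[OF ac cb, of "F c - (F a + \<epsilon>*(c-a) + \<epsilon>)"] Fc by auto
      have "c - d < Sup S" using d c_def by simp
      then obtain y where y: "y \<in> S" "c - d < y" using less_cSup_iff[of S "c-d"] aS bdd by auto
      have "y \<le> c" using Sc y by auto
      moreover have "y \<noteq> c" using y \<open>c \<notin> S\<close> by auto
      ultimately have "y < c" by simp
      moreover have "a \<le> y" using y by (simp add: S_def)
      ultimately have "F y > F a + \<epsilon>*(c-a) + \<epsilon>" using d y by auto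
      moreover have "\<epsilon>*(y-a) \<le> \<epsilon>*(c-a)" using \<open>y < c\<close> \<epsilon> by simp
      ultimately show False using y by (simp add: S_def)
    qed
    have "c = b"
    proof (rule ccontr)
      assume "c \<noteq> b" hence cb': "c < b" using cb by simp
      obtain d where d: "d>0" "\<forall>y. c < y \<and> y < c + d \<longrightarrow> F y \<le> F c + \<epsilon>*(y-c)" using der[OF ac cb' \<epsilon>] by auto
      define y where "y = min (c + d/2) b"
      have y: "c < y" "y < c+d" "y \<le> b" using d cb' by (auto simp: y_def)
      then have "F y \<le> F c + \<epsilon>*(y-c)" using d by auto
      moreover have "F c \<le> F a + \<epsilon>*(c-a) + \<epsilon>" using cS by (simp add: S_def)
      moreover have "\<epsilon>*(c-a) + \<epsilon>*(y-c) = \<epsilon>*(y-a)" by (simp add: algebra_simps)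
      ultimately have "y \<in> S" using y ac by (simp add: S_def)
      then show False using Sc y by force
    qed
    then have "F b \<le> F a + \<epsilon>*(b-a) + \<epsilon>" using cS by (simp add: S_def)
    moreover have "\<epsilon>*(b-a) + \<epsilon> = \<epsilon>*(b-a+1)" by (simp add: algebra_simps)
    moreover have "\<epsilon>*(b-a+1) = E" using ab' by (simp add: \<epsilon>_def)
    ultimately show "F b \<le> F a + E" by linarith
  qed
qed

lemma dini_cont:
  fixes F :: "real \<Rightarrow> real"
  assumes ab: "a \<le> b" and cont: "continuous_on {a..b} F"
  and der: "\<And>x e. a < x \<Longrightarrow> x < b \<Longrightarrow> e > 0 \<Longrightarrow> \<exists>d>0. \<forall>y. x < y \<and> y < x + d \<longrightarrow> F y \<le> F x + e * (y - x)"
  shows "F b \<le> F a"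
proof (cases "a = b")
  case True then show ?thesis by simp
next
  case False
  show ?thesis
proof (rule dini[OF ab _ _ der])
  fix x e :: real assume x: "a < x" "x \<le> b" "e > 0"
  then obtain d where d: "d>0" "\<forall>x'\<in>{a..b}. dist x' x < d \<longrightarrow> dist (F x') (F x) < e"
    using cont unfolding continuous_on_iff by (meson atLeastAtMost_iff less_le)
  show "\<exists>d>0. \<forall>y. a \<le> y \<and> y < x \<and> x - y < d \<longrightarrow> F x - e < F y"
  proof (intro exI[of _ d] conjI allI impI)
    fix y assume y: "a \<le> y \<and> y < x \<and> x - y < d"
    then have "\<bar>F y - F x\<bar> < e" using d(2)[rule_format, of y] x by (auto simp: dist_real_def)
    then show "F x - e < F y" by linarith
  qed (use d in auto)
next
  fix e :: real assume e: "e > 0"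
  show "\<exists>d>0. \<forall>y. a < y \<and> y < a + d \<longrightarrow> F y \<le> F a + e"
  proof -
    obtain d where d: "d>0" "\<forall>x'\<in>{a..b}. dist x' a < d \<longrightarrow> dist (F x') (F a) < e"
      using cont e ab unfolding continuous_on_iff by (meson atLeastAtMost_iff order_refl)
    have "b - a > 0" using False ab by simp
    show ?thesis
    proof (intro exI[of _ "min d (b-a)"] conjI allI impI)
      fix y assume y: "a < y \<and> y < a + min d (b - a)"
      then have "\<bar>F y - F a\<bar> < e" using d(2)[rule_format, of y] by (auto simp: dist_real_def)
      then show "F y \<le> F a + e" by linarith
    qed (use d \<open>b - a > 0\<close> in auto)
  qed
qed (auto)
qed

lemma dini_cond:
  fixes F :: "real \<Rightarrow> real"
  assumes ab: "a \<le> b" and Fa: "F a \<le> 0"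
  and lsc: "\<And>x e. a \<le> x \<Longrightarrow> x \<le> b \<Longrightarrow> e > 0 \<Longrightarrow> \<exists>d>0. \<forall>y. a \<le> y \<and> y \<le> b \<and> \<bar>y - x\<bar> < d \<longrightarrow> F x - e < F y"
  and rc: "\<And>x e. a \<le> x \<Longrightarrow> x < b \<Longrightarrow> e > 0 \<Longrightarrow> \<exists>d>0. \<forall>y. x < y \<and> y < x + d \<longrightarrow> F y \<le> F x + e"
  and der: "\<And>x e. a < x \<Longrightarrow> x < b \<Longrightarrow> F x > 0 \<Longrightarrow> e > 0 \<Longrightarrow> \<exists>d>0. \<forall>y. x < y \<and> y < x + d \<longrightarrow> F y \<le> F x + e * (y - x)"
  shows "F b \<le> 0"
proof (rule ccontr)
  assume Fb: "\<not> F b \<le> 0"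
  define T where "T = {x. a \<le> x \<and> x \<le> b \<and> F x \<le> 0}"
  define c where "c = Sup T"
  have aT: "a \<in> T" using Fa ab by (simp add: T_def)
  have bdd: "bdd_above T" by (auto simp: T_def bdd_above_def)
  have Tc: "x \<in> T \<Longrightarrow> x \<le> c" for x using cSup_upper[OF _ bdd] c_def by auto
  have cb: "c \<le> b" unfolding c_def using aT by (intro cSup_least) (auto simp: T_def)
  have ac: "a \<le> c" using Tc aT by simp
  have Fc: "F c \<le> 0"
  proof (rule ccontr)
    assume nc: "\<not> F c \<le> 0"
    obtain d where d: "d>0" "\<forall>y. a \<le> y \<and> y \<le> b \<and> \<bar>y - c\<bar> < d \<longrightarrow> F c - F c < F y"
      using lsc[OF ac cb, of "F c"] nc by auto
    have "c - d < Sup T" using d c_def by simp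
    then obtain y where y: "y \<in> T" "c - d < y" using less_cSup_iff[of T "c-d"] aT bdd by auto
    have "y \<le> c" using Tc y by auto
    then have "F y > 0" using d y by (auto simp: T_def)
    then show False using y by (simp add: T_def)
  qed
  have cb': "c < b" using Fc Fb cb by (cases "c = b") auto
  have pos: "F x > 0" if "c < x" "x \<le> b" for x
  proof (rule ccontr)
    assume "\<not> F x > 0"
    then have "x \<in> T" using that ac by (simp add: T_def)
    then show False using Tc that by force
  qed
  have "F b \<le> F c"
  proof (rule dini[OF cb])
    fix x e :: real assume x: "c < x" "x \<le> b" "e > 0"
    obtain d where d: "d>0" "\<forall>y. a \<le> y \<and> y \<le> b \<and> \<bar>y - x\<bar> < d \<longrightarrow> F x - e < F y"
      using lsc[of x e] x ac by auto
    show "\<exists>d>0. \<forall>y. c \<le> y \<and> y < x \<and> x - y < d \<longrightarrow> F x - e < F y"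
      by (rule exI[of _ d]) (use d x ac in auto)
  next
    fix e :: real assume "e > 0"
    then show "\<exists>d>0. \<forall>y. c < y \<and> y < c + d \<longrightarrow> F y \<le> F c + e" using rc[OF ac cb'] by auto
  next
    fix x e :: real assume x: "c < x" "x < b" "e > 0"
    then show "\<exists>d>0. \<forall>y. x < y \<and> y < x + d \<longrightarrow> F y \<le> F x + e * (y - x)"
      using der[of x e] pos[of x] ac by auto
  qed
  then show False using Fc Fb by simp
qed



lemma par: fixes x y :: "'a::real_inner" shows "(norm (x - y))^2 = 2*(norm x)^2 + 2*(norm y)^2 - 4*(norm ((1/2) *\<^sub>R (x + y)))^2"
  by (simp add: power2_norm_eq_inner algebra_simps inner_commute)

lemma eps_lower:
  fixes P :: "real \<Rightarrow> 'a::{real_inner,complete_space} \<Rightarrow> bool"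
  assumes mono: "\<And>e e' x. e \<le> e' \<Longrightarrow> P e x \<Longrightarrow> P e' x"
  and mid: "\<And>e x y. P e x \<Longrightarrow> P e y \<Longrightarrow> P e ((1/2) *\<^sub>R (x + y))"
  and clo: "\<And>X m. X \<longlonglongrightarrow> m \<Longrightarrow> (\<And>e. e > 0 \<Longrightarrow> \<forall>\<^sub>F n in sequentially. P e (X n)) \<Longrightarrow> P 0 m"
  and z: "P 0 z" and zmin: "\<And>x. P 0 x \<Longrightarrow> norm z \<le> norm x"
  and k: "k > 0"
  shows "\<exists>e>0. \<forall>x. P e x \<longrightarrow> norm z - k \<le> norm x"
proof (rule ccontr)
  assume "\<not> ?thesis"
  then have neg: "\<And>e. e > 0 \<Longrightarrow> \<exists>x. P e x \<and> norm x < norm z - k" by (auto simp: not_le)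
  define ep where "ep = (\<lambda>n::nat. 1 / real (Suc n))"
  have ep_pos: "ep n > 0" for n by (simp add: ep_def)
  have ep_mono: "m \<le> n \<Longrightarrow> ep n \<le> ep m" for m n by (simp add: ep_def frac_le)
  define E where "E = (\<lambda>n. norm ` {x. P (ep n) x})"
  define r where "r = (\<lambda>n. Inf (E n))"
  have zE: "norm z \<in> E n" for n using mono[OF less_imp_le[OF ep_pos] z] by (auto simp: E_def)
  have Ene: "E n \<noteq> {}" for n using zE by auto
  have Ebdd: "bdd_below (E n)" for n by (auto simp: E_def bdd_below_def intro!: exI[of _ 0])
  have r_inc: "incseq r"
  proof (unfold incseq_def, intro allI impI)
    fix m n :: nat assume "m \<le> n"
    then have "E n \<subseteq> E m" using mono[OF ep_mono] by (auto simp: E_def)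
    then show "r m \<le> r n" unfolding r_def by (rule cInf_superset_mono[OF Ene Ebdd])
  qed
  have r_le: "r n \<le> norm z - k" for n
  proof -
    obtain x where "P (ep n) x" "norm x < norm z - k" using neg[OF ep_pos] by blast
    then have "r n \<le> norm x" unfolding r_def by (intro cInf_lower[OF _ Ebdd]) (auto simp: E_def)
    then show ?thesis using \<open>norm x < norm z - k\<close> by simp
  qed
  have r_ge: "0 \<le> r n" for n unfolding r_def by (rule cInf_greatest[OF Ene]) (auto simp: E_def)
  define R where "R = Sup (range r)"
  have rbdd: "bdd_above (range r)" using r_le by (auto simp: bdd_above_def)
  have rR: "r \<longlonglongrightarrow> R" unfolding R_def by (rule LIMSEQ_incseq_SUP[OF rbdd r_inc])
  have r_leR: "r n \<le> R" for n unfolding R_def using rbdd by (auto intro: cSUP_upper)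
  have R_le: "R \<le> norm z - k" unfolding R_def by (rule cSUP_least) (use r_le in auto)
  have "\<forall>n. \<exists>x. P (ep n) x \<and> norm x < r n + ep n"
  proof
    fix n
    have "Inf (E n) < r n + ep n" using ep_pos[of n] by (simp add: r_def)
    then obtain y where "y \<in> E n" "y < r n + ep n" using cInf_lessD[OF Ene] by blast
    then show "\<exists>x. P (ep n) x \<and> norm x < r n + ep n" by (auto simp: E_def)
  qed
  then obtain X where X: "\<And>n. P (ep n) (X n)" "\<And>n. norm (X n) < r n + ep n" by metis
  have r_low: "P (ep n) x \<Longrightarrow> r n \<le> norm x" for n x
    unfolding r_def by (intro cInf_lower[OF _ Ebdd]) (auto simp: E_def)
  have ep0: "ep \<longlonglongrightarrow> 0" unfolding ep_def using LIMSEQ_inverse_real_of_nat by (simp add: inverse_eq_divide)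
  define B where "B = (\<lambda>n. 4 * ((R + ep n)^2 - (r n)^2))"
  have B0: "B \<longlonglongrightarrow> 4 * ((R + 0)^2 - R^2)" unfolding B_def by (intro tendsto_intros rR ep0)
  have Bbound: "(dist (X m) (X n))^2 \<le> B m" if "m \<le> n" for m n
  proof -
    have "P (ep m) (X n)" using mono[OF ep_mono[OF that] X(1)] .
    then have "P (ep m) ((1/2) *\<^sub>R (X m + X n))" using mid X(1) by blast
    then have h1: "r m \<le> norm ((1/2) *\<^sub>R (X m + X n))" by (rule r_low)
    have h2: "norm (X m) \<le> R + ep m" using X(2)[of m] r_leR[of m] by simp
    have h3: "norm (X n) \<le> R + ep m" using X(2)[of n] r_leR[of n] ep_mono[OF that] by simp
    have "(dist (X m) (X n))^2 = 2*(norm (X m))^2 + 2*(norm (X n))^2 - 4*(norm ((1/2) *\<^sub>R (X m + X n)))^2"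
      by (simp add: dist_norm par)
    also have "\<dots> \<le> 2*(R + ep m)^2 + 2*(R + ep m)^2 - 4*(r m)^2"
      using h1 h2 h3 r_ge[of m] by (intro diff_mono add_mono mult_left_mono power_mono) auto
    finally show ?thesis by (simp add: B_def algebra_simps)
  qed
  have "Cauchy X"
  proof (rule metric_CauchyI)
    fix e :: real assume e: "e > 0"
    have "B \<longlonglongrightarrow> 0" using B0 by simp
    then obtain M where M: "\<And>n. n \<ge> M \<Longrightarrow> B n < e^2"
      using order_tendstoD(2)[of B 0 sequentially "e^2"] e by (auto simp: eventually_sequentially)
    show "\<exists>M. \<forall>m\<ge>M. \<forall>n\<ge>M. dist (X m) (X n) < e"
    proof (intro exI allI impI)
      fix m n assume mn: "m \<ge> M" "n \<ge> M"
      have "(dist (X m) (X n))^2 < e^2"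
      proof (cases "m \<le> n")
        case True then show ?thesis using Bbound[OF True] M[OF mn(1)] by simp
      next
        case False then show ?thesis using Bbound[of n m] M[OF mn(2)] by (simp add: dist_commute)
      qed
      then show "dist (X m) (X n) < e" using e by (simp add: power_less_imp_less_base)
    qed
  qed
  then obtain m where m: "X \<longlonglongrightarrow> m" using Cauchy_convergent convergent_def by blast
  have "P 0 m"
  proof (rule clo[OF m])
    fix e :: real assume "e > 0"
    then have "\<forall>\<^sub>F n in sequentially. ep n < e" using order_tendstoD(2)[OF ep0] by auto
    then show "\<forall>\<^sub>F n in sequentially. P e (X n)"
      by eventually_elim (use X(1) mono less_imp_le in blast)
  qed
  then have "norm z \<le> norm m" by (rule zmin)
  moreover have "norm m \<le> R"
  proof -
    have l1: "(\<lambda>n. R + ep n) \<longlonglongrightarrow> R" using tendsto_add[OF tendsto_const ep0, of R] by simp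
    have ev: "\<forall>\<^sub>F n in sequentially. norm (X n) \<le> R + ep n"
    proof (rule always_eventually, rule allI)
      fix n show "norm (X n) \<le> R + ep n" using X(2)[of n] r_leR[of n] by simp
    qed
    show ?thesis by (rule tendsto_le[OF _ l1 tendsto_norm[OF m] ev]) simp
  qed
  ultimately show False using R_le k by simp
qed

lemma eps_tendsto:
  fixes P :: "real \<Rightarrow> 'a::{real_inner,complete_space} \<Rightarrow> bool"
  assumes mono: "\<And>e e' x. e \<le> e' \<Longrightarrow> P e x \<Longrightarrow> P e' x"
  and mid: "\<And>e x y. P e x \<Longrightarrow> P e y \<Longrightarrow> P e ((1/2) *\<^sub>R (x + y))"
  and clo: "\<And>X m. X \<longlonglongrightarrow> m \<Longrightarrow> (\<And>e. e > 0 \<Longrightarrow> \<forall>\<^sub>F n in sequentially. P e (X n)) \<Longrightarrow> P 0 m"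
  and z: "P 0 z" and zmin: "\<And>x. P 0 x \<Longrightarrow> norm z \<le> norm x"
  and e0: "(ee \<longlongrightarrow> 0) F" and ev: "\<forall>\<^sub>F s in F. P (ee s) (eta s)"
  and nb: "\<forall>\<^sub>F s in F. norm (eta s) \<le> norm z"
  shows "(eta \<longlongrightarrow> z) F"
proof (rule tendstoI)
  fix r :: real assume r: "r > 0"
  define k where "k = min (r/4) (r^2 / (8 * (norm z + 1)))"
  have "0 < r^2 / (8 * (norm z + 1))" using r by (intro divide_pos_pos) (auto intro: add_nonneg_pos)
  then have k: "k > 0" using r by (simp add: k_def)
  have "\<exists>e>0. \<forall>x. P e x \<longrightarrow> norm z - k \<le> norm x"
    using mono mid clo z zmin k by (rule eps_lower)
  then obtain e where e: "e > 0" "\<And>x. P e x \<Longrightarrow> norm z - k \<le> norm x" by blast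
  have "\<forall>\<^sub>F s in F. ee s < e" using order_tendstoD(2)[OF e0] e by auto
  with ev nb show "\<forall>\<^sub>F s in F. dist (eta s) z < r"
  proof eventually_elim
    case (elim s)
    have Pe: "P e (eta s)" using mono[of "ee s" e] elim by auto
    have Pz: "P e z" using mono[OF less_imp_le[OF e(1)] z] .
    have lm: "norm z - k \<le> norm ((1/2) *\<^sub>R (eta s + z))" using e(2)[OF mid[OF Pe Pz]] .
    show ?case
    proof (cases "norm z < k")
      case True
      have "dist (eta s) z \<le> norm (eta s) + norm z" by (simp add: dist_norm norm_triangle_ineq4)
      also have "\<dots> < r"
      proof -
        have "k \<le> r/4" unfolding k_def by (rule min.cobounded1)
        then show ?thesis using True elim r by linarith
      qed
      finally show ?thesis .
    next
      case False
      have "(norm z - k)^2 \<le> (norm ((1/2) *\<^sub>R (eta s + z)))^2" using lm False by (intro power_mono) auto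
      then have "(dist (eta s) z)^2 \<le> 2*(norm (eta s))^2 + 2*(norm z)^2 - 4*(norm z - k)^2"
        by (simp add: dist_norm par)
      also have "\<dots> \<le> 4*(norm z)^2 - 4*(norm z - k)^2" using elim by (simp add: power_mono)
      also have "\<dots> = 8*k*norm z - 4*k^2" by (simp add: power2_eq_square algebra_simps)
      also have "\<dots> \<le> 8*k*norm z" by simp
      also have "\<dots> \<le> 8 * (r^2 / (8 * (norm z + 1))) * norm z"
        by (intro mult_right_mono mult_left_mono) (auto simp: k_def)
      also have "\<dots> < r^2"
      proof -
        have "norm z + 1 > 0" by (simp add: add_nonneg_pos)
        then have "8 * (r^2 / (8 * (norm z + 1))) * norm z = r^2 * (norm z / (norm z + 1))" by (simp add: field_simps)
        also have "\<dots> < r^2 * 1" using r \<open>norm z + 1 > 0\<close> by (intro mult_strict_left_mono) (auto simp: divide_less_eq)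
        finally show ?thesis by simp
      qed
      finally show ?thesis using r by (simp add: power_less_imp_less_base)
    qed
  qed
qed



locale gf =
  fixes J :: "'a::{real_inner, complete_space} \<Rightarrow> ereal" and p :: real and f :: 'a and u :: "real \<Rightarrow> 'a"
  assumes conv: "convex_fun J" and lsc: "lsc_fun J" and prp: "proper_fun J"
    and hom: "abs_homogeneous p J" and coerc: "0 < lambda1 p J" and p2: "p \<ge> 2"
    and f: "f \<in> H0 J" and flow: "gradient_flow J f u"
begin

definition Jr where "Jr v = real_of_ereal (J v)"

lemma J0: "J 0 = 0" using hom by (simp add: abs_homogeneous_def)

lemma J_hom: "c \<noteq> 0 \<Longrightarrow> J (c *\<^sub>R v) = ereal (\<bar>c\<bar> powr p) * J v"
  using hom by (simp add: abs_homogeneous_def)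

lemma J_neg: "J (-v) = J v"
  using J_hom[of "-1" v] by simp

lemma J_not_minf: "J v \<noteq> -\<infinity>" using prp by (simp add: proper_fun_def)

lemma conv_ineq: "0 \<le> \<theta> \<Longrightarrow> \<theta> \<le> 1 \<Longrightarrow> J ((1 - \<theta>) *\<^sub>R x + \<theta> *\<^sub>R y) \<le> ereal (1 - \<theta>) * J x + ereal \<theta> * J y"
  using conv by (simp add: convex_fun_def)

lemma J_nonneg: "0 \<le> J v"
proof -
  have "J ((1 - 1/2) *\<^sub>R v + (1/2) *\<^sub>R (-v)) \<le> ereal (1 - 1/2) * J v + ereal (1/2) * J (-v)"
    by (rule conv_ineq) auto
  then have "0 \<le> ereal (1/2) * J v + ereal (1/2) * J v" by (simp add: J_neg J0)
  then show ?thesis using J_not_minf[of v] by (cases "J v") auto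
qed

lemma Jr_nonneg: "0 \<le> Jr v"
  using J_nonneg[of v] by (cases "J v") (auto simp: Jr_def)

lemma J_fin: "J v \<noteq> \<infinity> \<Longrightarrow> J v = ereal (Jr v)"
  using J_not_minf[of v] by (cases "J v") (auto simp: Jr_def)

lemma sub_fin: assumes "\<zeta> \<in> subdiff J v" shows "J v \<noteq> \<infinity>"
proof
  assume inf: "J v = \<infinity>"
  obtain x where x: "J x \<noteq> \<infinity>" using prp by (auto simp: proper_fun_def)
  have "J v + ereal (\<zeta> \<bullet> (x - v)) \<le> J x" using assms by (simp add: subdiff_def)
  then show False using inf x by simp
qed

lemma subgrad: assumes "\<zeta> \<in> subdiff J v" "J w \<noteq> \<infinity>" shows "Jr v + \<zeta> \<bullet> (w - v) \<le> Jr w"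
proof -
  have "J v + ereal (\<zeta> \<bullet> (w - v)) \<le> J w" using assms by (simp add: subdiff_def)
  then show ?thesis using J_fin[OF sub_fin[OF assms(1)]] J_fin[OF assms(2)] by (metis ereal_less_eq(3) plus_ereal.simps(1))
qed

lemma subgrad_iff: "J v \<noteq> \<infinity> \<Longrightarrow> \<zeta> \<in> subdiff J v \<longleftrightarrow> (\<forall>w. J w \<noteq> \<infinity> \<longrightarrow> Jr v + \<zeta> \<bullet> (w - v) \<le> Jr w)"
proof
  assume "J v \<noteq> \<infinity>" "\<zeta> \<in> subdiff J v" then show "\<forall>w. J w \<noteq> \<infinity> \<longrightarrow> Jr v + \<zeta> \<bullet> (w - v) \<le> Jr w"
    using subgrad by blast
next
  assume fv: "J v \<noteq> \<infinity>" and H: "\<forall>w. J w \<noteq> \<infinity> \<longrightarrow> Jr v + \<zeta> \<bullet> (w - v) \<le> Jr w"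
  show "\<zeta> \<in> subdiff J v" unfolding subdiff_def
  proof (safe)
    fix w show "J v + ereal (\<zeta> \<bullet> (w - v)) \<le> J w"
    proof (cases "J w = \<infinity>")
      case True then show ?thesis by simp
    next
      case False
      then show ?thesis using H J_fin[OF fv] J_fin[OF False] by (metis ereal_less_eq(3) plus_ereal.simps(1))
    qed
  qed
qed

lemma monot: assumes "z1 \<in> subdiff J v1" "z2 \<in> subdiff J v2" shows "0 \<le> (z1 - z2) \<bullet> (v1 - v2)"
proof -
  have "Jr v1 + z1 \<bullet> (v2 - v1) \<le> Jr v2" using subgrad[OF assms(1) sub_fin[OF assms(2)]] .
  moreover have "Jr v2 + z2 \<bullet> (v1 - v2) \<le> Jr v1" using subgrad[OF assms(2) sub_fin[OF assms(1)]] .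
  ultimately show ?thesis by (simp add: algebra_simps inner_diff_left inner_diff_right)
qed

lemma zero_sub: "0 \<in> subdiff J 0"
  using J_nonneg by (simp add: subdiff_def J0 zero_ereal_def)

lemma euler: assumes z: "\<zeta> \<in> subdiff J v" shows "\<zeta> \<bullet> v = p * Jr v"
proof -
  define r where "r = Jr v"
  define q where "q = \<zeta> \<bullet> v"
  define g where "g = (\<lambda>c::real. c powr p * r - r - (c - 1) * q)"
  have Jv: "J v = ereal r" using J_fin[OF sub_fin[OF z]] by (simp add: r_def)
  have ge: "g 1 \<le> g c" if "\<bar>1 - c\<bar> < 1" for c
  proof -
    have c: "c > 0" using that by simp
    have Jc: "J (c *\<^sub>R v) = ereal (c powr p * r)" using J_hom[of c v] c Jv by simp
    have "Jr v + \<zeta> \<bullet> (c *\<^sub>R v - v) \<le> Jr (c *\<^sub>R v)" using subgrad[OF z] Jc by simp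
    then have "r + (c - 1) * q \<le> c powr p * r" using Jc by (simp add: r_def q_def Jr_def inner_diff_right algebra_simps)
    then show ?thesis by (simp add: g_def)
  qed
  have "(g has_real_derivative (p * 1 powr (p - 1) * r - q)) (at 1)"
    unfolding g_def by (rule derivative_eq_intros has_real_derivative_powr | simp)+
  then have "p * 1 powr (p - 1) * r - q = 0" using ge by (intro DERIV_local_min[of g _ 1 1]) auto
  then show ?thesis by (simp add: r_def q_def)
qed

lemma Jr_le: "J w \<le> ereal c \<Longrightarrow> Jr w \<le> c"
  using J_not_minf[of w] by (cases "J w") (auto simp: Jr_def)

lemma null_orth: assumes z: "\<zeta> \<in> subdiff J v" and n: "J n = 0" shows "\<zeta> \<bullet> n = 0"
proof -
  define r where "r = Jr v"
  have Jv: "J v = ereal r" using J_fin[OF sub_fin[OF z]] by (simp add: r_def)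
  have key: "s * (\<zeta> \<bullet> n) \<le> 0" for s
  proof -
    have ineq: "r + s * (\<zeta> \<bullet> n) \<le> \<theta> * ((1/\<theta>) powr p * r)" if th: "0 < \<theta>" "\<theta> < 1" for \<theta>
    proof -
      define \<mu> where "\<mu> = 1 - \<theta>"
      have mu: "0 < \<mu>" "\<mu> \<le> 1" "1 - \<mu> = \<theta>" using th by (auto simp: \<mu>_def)
      have decomp: "v + s *\<^sub>R n = (1 - \<mu>) *\<^sub>R ((1/\<theta>) *\<^sub>R v) + \<mu> *\<^sub>R ((s/\<mu>) *\<^sub>R n)"
        using mu th by (simp add: scaleR_scaleR)
      have Jx: "J ((1/\<theta>) *\<^sub>R v) = ereal ((1/\<theta>) powr p * r)" using J_hom[of "1/\<theta>" v] th Jv by simp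
      have Jy: "J ((s/\<mu>) *\<^sub>R n) = 0"
      proof (cases "s = 0")
        case True then show ?thesis by (simp add: J0)
      next
        case False then show ?thesis using J_hom[of "s/\<mu>" n] n mu by simp
      qed
      have "J (v + s *\<^sub>R n) \<le> ereal (1 - \<mu>) * J ((1/\<theta>) *\<^sub>R v) + ereal \<mu> * J ((s/\<mu>) *\<^sub>R n)"
        unfolding decomp by (rule conv_ineq) (use mu in auto)
      also have "\<dots> = ereal (\<theta> * ((1/\<theta>) powr p * r))" using Jx Jy mu by simp
      finally have le: "J (v + s *\<^sub>R n) \<le> ereal (\<theta> * ((1/\<theta>) powr p * r))" .
      then have "J (v + s *\<^sub>R n) \<noteq> \<infinity>" by auto
      then have "Jr v + \<zeta> \<bullet> (v + s *\<^sub>R n - v) \<le> Jr (v + s *\<^sub>R n)" by (rule subgrad[OF z])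
      also have "\<dots> \<le> \<theta> * ((1/\<theta>) powr p * r)" by (rule Jr_le[OF le])
      finally show ?thesis by (simp add: r_def)
    qed
    have lim: "((\<lambda>\<theta>. \<theta> * ((1/\<theta>) powr p * r)) \<longlongrightarrow> 1 * ((1/1) powr p * r)) (at_left 1)"
      by (intro tendsto_intros) auto
    have ev: "\<forall>\<^sub>F \<theta> in at_left 1. r + s * (\<zeta> \<bullet> n) \<le> \<theta> * ((1/\<theta>) powr p * r)"
      unfolding eventually_at_left_field by (intro exI[of _ 0]) (auto intro: ineq)
    have "r + s * (\<zeta> \<bullet> n) \<le> 1 * ((1/1) powr p * r)"
      by (rule tendsto_le[OF trivial_limit_at_left_real lim tendsto_const ev])
    then show ?thesis by simp
  qed
  from key[of 1] key[of "-1"] show ?thesis by simp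
qed

definition z where "z t = (SOME \<zeta>. min_norm_elem \<zeta> (subdiff J (u t)) \<and> (u has_vector_derivative - \<zeta>) (at_right t))"

lemma z_prop: "t > 0 \<Longrightarrow> min_norm_elem (z t) (subdiff J (u t)) \<and> (u has_vector_derivative - z t) (at_right t)"
  unfolding z_def by (rule someI_ex) (use flow in \<open>auto simp: gradient_flow_def\<close>)

lemma z_sub: "t > 0 \<Longrightarrow> z t \<in> subdiff J (u t)" using z_prop by (simp add: min_norm_elem_def)
lemma z_min: "t > 0 \<Longrightarrow> \<eta> \<in> subdiff J (u t) \<Longrightarrow> norm (z t) \<le> norm \<eta>" using z_prop by (simp add: min_norm_elem_def)
lemma u_der: "t > 0 \<Longrightarrow> (u has_vector_derivative - z t) (at_right t)" using z_prop by simp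
lemma u0: "u 0 = f" using flow by (simp add: gradient_flow_def)
lemma u_cont: "continuous_on {0..} u" using flow by (simp add: gradient_flow_def)
lemma u_fin: "t > 0 \<Longrightarrow> J (u t) \<noteq> \<infinity>" using sub_fin[OF z_sub] .

definition Psi where "Psi t = Jr (u t)"

lemma Psi_nonneg: "0 \<le> Psi t" by (simp add: Psi_def Jr_nonneg)
lemma J_u: "t > 0 \<Longrightarrow> J (u t) = ereal (Psi t)" using J_fin[OF u_fin] by (simp add: Psi_def)
lemma euler_t: "t > 0 \<Longrightarrow> z t \<bullet> u t = p * Psi t" using euler[OF z_sub] by (simp add: Psi_def)

lemma q_lim: "t > 0 \<Longrightarrow> ((\<lambda>s. (1/(s-t)) *\<^sub>R (u s - u t)) \<longlongrightarrow> - z t) (at_right t)"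
  using vderiv_quot[OF u_der] .

lemma u_isCont: "t > 0 \<Longrightarrow> isCont u t"
  using continuous_on_interior[OF u_cont, of t] by simp

lemma u_cont_sub: "0 \<le> a \<Longrightarrow> continuous_on {a..b} u"
  using continuous_on_subset[OF u_cont] by auto

lemma u_tendsto: "t > 0 \<Longrightarrow> (u \<longlongrightarrow> u t) (at_right t)"
  using u_isCont by (simp add: isCont_def filterlim_at_split)

lemma u_tendsto0: "(u \<longlongrightarrow> f) (at_right 0)"
proof -
  have "(u \<longlongrightarrow> u 0) (at 0 within {0..})" using u_cont by (simp add: continuous_on_def)
  then have "(u \<longlongrightarrow> u 0) (at 0 within {0<..})" by (rule tendsto_within_subset) auto
  then show ?thesis by (simp add: u0)
qed

lemma der_quot:
  fixes F :: "real \<Rightarrow> real"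
  assumes "((\<lambda>y. (F y - F x) / (y - x)) \<longlongrightarrow> L) (at_right x)" "L \<le> 0" "e > 0"
  shows "\<exists>d>0. \<forall>y. x < y \<and> y < x + d \<longrightarrow> F y \<le> F x + e * (y - x)"
proof (rule der_bound[OF assms(1,2) _ assms(3)])
  show "\<forall>\<^sub>F y in at_right x. F y - F x \<le> (y - x) * ((F y - F x) / (y - x))"
    unfolding eventually_at_right_field by (intro exI[of _ "x+1"]) auto
qed

lemma der_deriv:
  fixes F :: "real \<Rightarrow> real"
  assumes "(F has_real_derivative L) (at x within {x<..})" "L \<le> 0" "e > 0"
  shows "\<exists>d>0. \<forall>y. x < y \<and> y < x + d \<longrightarrow> F y \<le> F x + e * (y - x)"
  using der_quot[OF has_field_derivativeD[OF assms(1)] assms(2,3)] .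

lemma u_orth: assumes t: "t \<ge> 0" and n: "n \<in> null_set J" shows "u t \<bullet> n = 0"
proof -
  have Jn: "J n = 0" using n by (simp add: null_set_def)
  have cont: "continuous_on {0..t} (\<lambda>s. u s \<bullet> n)" by (intro continuous_intros u_cont_sub) auto
  have f0: "f \<bullet> n = 0" using f n by (simp add: H0_def)
  have qd: "((\<lambda>y. (u y \<bullet> n - u x \<bullet> n) / (y - x)) \<longlongrightarrow> 0) (at_right x)" if "x > 0" for x
  proof -
    have "((\<lambda>y. ((1/(y-x)) *\<^sub>R (u y - u x)) \<bullet> n) \<longlongrightarrow> (- z x) \<bullet> n) (at_right x)"
      by (intro tendsto_intros q_lim that)
    then show ?thesis using null_orth[OF z_sub[OF that] Jn]
      by (simp add: inner_diff_left divide_inverse mult.commute)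
  qed
  have "u t \<bullet> n \<le> u 0 \<bullet> n"
    by (rule dini_cont[OF t cont]) (rule der_quot[OF qd]; simp)
  moreover have "- (u t \<bullet> n) \<le> - (u 0 \<bullet> n)"
  proof (rule dini_cont[OF t, where F="\<lambda>s. - (u s \<bullet> n)"])
    show "continuous_on {0..t} (\<lambda>s. - (u s \<bullet> n))" by (intro continuous_intros cont)
  next
    fix x e :: real assume x: "0 < x" "x < t" "0 < e"
    have "((\<lambda>y. (- (u y \<bullet> n) - - (u x \<bullet> n)) / (y - x)) \<longlongrightarrow> - 0) (at_right x)"
      using tendsto_minus[OF qd[OF x(1)]] by (simp add: minus_divide_left)
    then show "\<exists>d>0. \<forall>y. x < y \<and> y < x + d \<longrightarrow> - (u y \<bullet> n) \<le> - (u x \<bullet> n) + e * (y - x)"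
      by (rule der_quot) (use x in auto)
  qed
  ultimately show ?thesis using f0 u0 by simp
qed

lemma u_H0: "t \<ge> 0 \<Longrightarrow> u t \<noteq> 0 \<Longrightarrow> u t \<in> H0 J"
  using u_orth by (auto simp: H0_def)

lemma l1_le: assumes "v \<in> H0 J" "J v \<noteq> \<infinity>" shows "lambda1 p J \<le> ereal (p * Jr v / norm v powr p)"
proof -
  have "lambda1 p J \<le> ereal p * J v / ereal (norm v powr p)"
    unfolding lambda1_def by (rule INF_lower[OF assms(1)])
  also have "\<dots> = ereal (p * Jr v / norm v powr p)" using J_fin[OF assms(2)] assms(1)
    by (simp add: H0_def)
  finally show ?thesis .
qed

end


context gf begin

lemma sqdiff: fixes a b :: "'b::real_inner" shows "((1/(y-t)) *\<^sub>R (a - b)) \<bullet> (a + b) = ((norm a)^2 - (norm b)^2) / (y - t)"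
proof -
  have "(a - b) \<bullet> (a + b) = (norm a)^2 - (norm b)^2"
    unfolding inner_diff_left inner_add_right power2_norm_eq_inner by (simp add: inner_commute[of b a])
  then show ?thesis by (simp add: divide_inverse mult.commute)
qed

definition l1 where "l1 = real_of_ereal (lambda1 p J)"

lemma exists_nonzero: "\<exists>t0>0. u t0 \<noteq> 0"
proof -
  have f0: "f \<noteq> 0" using f by (simp add: H0_def)
  have "\<forall>\<^sub>F s in at_right 0. u s \<noteq> 0" using tendsto_imp_eventually_ne[OF u_tendsto0 f0] .
  then obtain b where b: "b > 0" "\<And>y. 0 < y \<Longrightarrow> y < b \<Longrightarrow> u y \<noteq> 0" unfolding eventually_at_right_field by auto
  show ?thesis by (rule exI[of _ "b/2"]) (use b in auto)
qed

lemma l1: "lambda1 p J = ereal l1" "l1 > 0"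
proof -
  obtain t0 where t0: "t0 > 0" "u t0 \<noteq> 0" using exists_nonzero by blast
  have "lambda1 p J \<le> ereal (p * Jr (u t0) / norm (u t0) powr p)"
    by (rule l1_le[OF u_H0 u_fin]) (use t0 in auto)
  then show "lambda1 p J = ereal l1" "l1 > 0" using coerc unfolding l1_def
    by (cases "lambda1 p J"; auto)+
qed

lemma coercive: assumes "v \<in> H0 J" "J v \<noteq> \<infinity>" shows "l1 * norm v powr p \<le> p * Jr v"
proof -
  have "ereal l1 \<le> ereal (p * Jr v / norm v powr p)" using l1_le[OF assms] l1 by simp
  then have "l1 \<le> p * Jr v / norm v powr p" by simp
  moreover have "norm v powr p > 0" using assms by (simp add: H0_def)
  ultimately show ?thesis by (simp add: pos_le_divide_eq)
qed

lemma coercive_t: assumes "t > 0" shows "l1 * norm (u t) powr p \<le> p * Psi t"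
proof (cases "u t = 0")
  case True then show ?thesis using Psi_nonneg[of t] p2 by simp
next
  case False then show ?thesis using coercive[OF u_H0 u_fin] assms by (simp add: Psi_def)
qed

lemma G_quot: "((\<lambda>y. ((norm (u y))^2 - (norm (u t))^2) / (y - t)) \<longlongrightarrow> -2*p*Psi t) (at_right t)" if "t > 0"
proof -
  have "((\<lambda>y. ((1/(y-t)) *\<^sub>R (u y - u t)) \<bullet> (u y + u t)) \<longlongrightarrow> (- z t) \<bullet> (u t + u t)) (at_right t)"
    by (intro tendsto_intros q_lim that u_tendsto)
  moreover have "(\<lambda>y. ((1/(y-t)) *\<^sub>R (u y - u t)) \<bullet> (u y + u t)) = (\<lambda>y. ((norm (u y))^2 - (norm (u t))^2) / (y - t))"
    by (rule ext, rule sqdiff)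
  moreover have "(- z t) \<bullet> (u t + u t) = -2*p*Psi t" using euler_t[OF that] by (simp add: inner_add_right)
  ultimately show ?thesis by metis
qed

lemma G_der: "t > 0 \<Longrightarrow> ((\<lambda>s. (norm (u s))^2) has_real_derivative (-2*p*Psi t)) (at t within {t<..})"
  using G_quot by (simp add: has_field_derivative_iff)

lemma G_cont: "0 \<le> a \<Longrightarrow> continuous_on {a..b} (\<lambda>s. (norm (u s))^2)"
  by (intro continuous_intros u_cont_sub)

lemma norm_mono: assumes "0 \<le> s" "s \<le> t" shows "norm (u t) \<le> norm (u s)"
proof -
  have "(norm (u t))^2 \<le> (norm (u s))^2"
  proof (rule dini_cont[OF assms(2) G_cont[OF assms(1)]])
    fix x e :: real assume x: "s < x" "x < t" "e > 0"
    show "\<exists>d>0. \<forall>y. x < y \<and> y < x + d \<longrightarrow> (norm (u y))^2 \<le> (norm (u x))^2 + e * (y - x)"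
      by (rule der_deriv[OF G_der]) (use x assms Psi_nonneg[of x] p2 in auto)
  qed
  then show ?thesis by (simp add: power_mono_iff)
qed

lemma shift_quot: assumes "r > 0" "h \<ge> 0"
  shows "((\<lambda>y. (1/(y-r)) *\<^sub>R (u (y+h) - u (r+h))) \<longlongrightarrow> - z (r+h)) (at_right r)"
proof -
  have d1: "((\<lambda>y. y + h) has_vector_derivative 1) (at r within {r<..})"
    by (auto intro!: derivative_eq_intros)
  have img: "(\<lambda>y. y + h) ` {r<..} = {r+h<..}"
  proof (rule set_eqI)
    fix x show "x \<in> (\<lambda>y. y + h) ` {r<..} \<longleftrightarrow> x \<in> {r+h<..}"
    proof
      assume "x \<in> {r+h<..}" then show "x \<in> (\<lambda>y. y + h) ` {r<..}" by (intro image_eqI[of x _ "x - h"]) auto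
    qed auto
  qed
  have d2: "(u has_vector_derivative - z (r+h)) (at ((\<lambda>y. y + h) r) within (\<lambda>y. y + h) ` {r<..})"
    using u_der[of "r+h"] assms by (simp add: img)
  have "((u \<circ> (\<lambda>y. y + h)) has_vector_derivative 1 *\<^sub>R (- z (r+h))) (at r within {r<..})"
    by (rule vector_diff_chain_within[OF d1 d2])
  from vderiv_quot[OF this[simplified]] show ?thesis by (simp add: o_def)
qed

lemma diff_mono: assumes t: "t > 0" "t \<le> s" and h: "h > 0"
  shows "norm (u (s+h) - u s) \<le> norm (u (t+h) - u t)"
proof -
  define V where "V = (\<lambda>y. u (y+h) - u y)"
  have cont: "continuous_on {t..s} (\<lambda>y. (norm (V y))^2)"
  proof -
    have "continuous_on {t..s} (\<lambda>y. u (y+h))"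
      by (rule continuous_on_compose2[OF u_cont_sub[of "t+h" "s+h"]]) (use t h in \<open>auto intro!: continuous_intros\<close>)
    then show ?thesis unfolding V_def using t by (intro continuous_intros u_cont_sub) auto
  qed
  have "(norm (V s))^2 \<le> (norm (V t))^2"
  proof (rule dini_cont[OF t(2) cont])
    fix x e :: real assume x: "t < x" "x < s" "e > 0"
    have x0: "x > 0" using x t by simp
    have qV: "((\<lambda>y. (1/(y-x)) *\<^sub>R (V y - V x)) \<longlongrightarrow> - z (x+h) - - z x) (at_right x)"
    proof -
      have "((\<lambda>y. (1/(y-x)) *\<^sub>R (u (y+h) - u (x+h)) - (1/(y-x)) *\<^sub>R (u y - u x)) \<longlongrightarrow> - z (x+h) - - z x) (at_right x)"
        by (intro tendsto_intros shift_quot q_lim) (use x0 h in auto)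
      then show ?thesis by (simp add: V_def algebra_simps)
    qed
    have Vc: "(V \<longlongrightarrow> V x) (at_right x)"
    proof -
      have "((\<lambda>y. u (y+h)) \<longlongrightarrow> u (x+h)) (at_right x)"
      proof -
        have "isCont u (x+h)" using u_isCont x0 h by simp
        then have "((\<lambda>y. u (y+h)) \<longlongrightarrow> u (x+h)) (at x)"
          by (rule isCont_tendsto_compose) (auto intro!: tendsto_eq_intros)
        then show ?thesis by (simp add: filterlim_at_split)
      qed
      then show ?thesis unfolding V_def by (intro tendsto_intros u_tendsto x0)
    qed
    have lim: "((\<lambda>y. ((norm (V y))^2 - (norm (V x))^2) / (y - x)) \<longlongrightarrow> (- z (x+h) - - z x) \<bullet> (V x + V x)) (at_right x)"
    proof -
      have "((\<lambda>y. ((1/(y-x)) *\<^sub>R (V y - V x)) \<bullet> (V y + V x)) \<longlongrightarrow> (- z (x+h) - - z x) \<bullet> (V x + V x)) (at_right x)"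
        by (intro tendsto_intros qV Vc)
      moreover have "(\<lambda>y. ((1/(y-x)) *\<^sub>R (V y - V x)) \<bullet> (V y + V x)) = (\<lambda>y. ((norm (V y))^2 - (norm (V x))^2) / (y - x))"
        by (rule ext, rule sqdiff)
      ultimately show ?thesis by metis
    qed
    have "0 \<le> (z (x+h) - z x) \<bullet> (u (x+h) - u x)"
      by (rule monot[OF z_sub z_sub]) (use x0 h in auto)
    then have "(- z (x+h) - - z x) \<bullet> (V x + V x) \<le> 0"
      by (simp add: V_def inner_add_right algebra_simps inner_diff_left inner_minus_left)
    then show "\<exists>d>0. \<forall>y. x < y \<and> y < x + d \<longrightarrow> (norm (V y))^2 \<le> (norm (V x))^2 + e * (y - x)"
      using der_quot[OF lim _ x(3)] by blast
  qed
  then show ?thesis by (simp add: V_def power_mono_iff)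
qed

lemma quot0: assumes "t > 0" shows "((\<lambda>h. (1/h) *\<^sub>R (u (t+h) - u t)) \<longlongrightarrow> - z t) (at_right 0)"
proof -
  have "((\<lambda>s. (1/(s-t)) *\<^sub>R (u s - u t)) \<longlongrightarrow> - z t) (at_right t)" by (rule q_lim[OF assms])
  then have "((\<lambda>h. (1/((h+t)-t)) *\<^sub>R (u (h+t) - u t)) \<longlongrightarrow> - z t) (at_right 0)"
    by (simp add: filterlim_at_right_to_0[of _ _ t])
  then show ?thesis by (simp add: add.commute)
qed

lemma z_mono: assumes "0 < t" "t \<le> s" shows "norm (z s) \<le> norm (z t)"
proof -
  have l1: "((\<lambda>h. norm ((1/h) *\<^sub>R (u (s+h) - u s))) \<longlongrightarrow> norm (- z s)) (at_right 0)"
    by (intro tendsto_intros quot0) (use assms in auto)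
  have l2: "((\<lambda>h. norm ((1/h) *\<^sub>R (u (t+h) - u t))) \<longlongrightarrow> norm (- z t)) (at_right 0)"
    by (intro tendsto_intros quot0) (use assms in auto)
  have ev: "\<forall>\<^sub>F h in at_right 0. norm ((1/h) *\<^sub>R (u (s+h) - u s)) \<le> norm ((1/h) *\<^sub>R (u (t+h) - u t))"
    unfolding eventually_at_right_field
    by (intro exI[of _ 1]) (use diff_mono[OF assms] in \<open>auto intro!: divide_right_mono\<close>)
  show ?thesis using tendsto_le[OF trivial_limit_at_right_real l2 l1 ev] by simp
qed

end


context gf begin

lemma Psi_upper: "0 < t \<Longrightarrow> 0 < s \<Longrightarrow> Psi s - Psi t \<le> z s \<bullet> (u s - u t)"
  using subgrad[OF z_sub[of s] u_fin[of t]] by (simp add: Psi_def inner_diff_right)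

lemma Psi_lsc: assumes t: "t > 0" and e: "e > 0" shows "\<forall>\<^sub>F s in at t. Psi t - e < Psi s"
proof -
  define S where "S = {x. J x \<le> ereal (Psi t - e)}"
  have "closed S" using lsc by (simp add: lsc_fun_def S_def)
  then have op: "open (- S)" by auto
  have ut: "u t \<in> - S" using J_u[OF t] e by (simp add: S_def)
  have "\<forall>\<^sub>F s in at t. u s \<in> - S"
    by (rule topological_tendstoD[OF _ op ut]) (use u_isCont[OF t] in \<open>simp add: isCont_def\<close>)
  moreover have "\<forall>\<^sub>F s in at t. s > 0"
    using order_tendstoD(1)[OF tendsto_ident_at t] .
  ultimately show ?thesis
  proof eventually_elim
    case (elim s) then show ?case using J_u[of s] by (simp add: S_def)
  qed
qed

lemma Psi_lsc2: assumes t: "t > 0" and e: "e > 0" shows "\<exists>d>0. \<forall>y. \<bar>y - t\<bar> < d \<longrightarrow> Psi t - e < Psi y"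
proof -
  obtain d where d: "d > 0" "\<And>y. y \<noteq> t \<Longrightarrow> dist y t < d \<Longrightarrow> Psi t - e < Psi y"
    using Psi_lsc[OF t e] unfolding eventually_at by auto
  show ?thesis
  proof (intro exI[of _ d] conjI allI impI)
    fix y assume "\<bar>y - t\<bar> < d" then show "Psi t - e < Psi y" using d e by (cases "y = t") (auto simp: dist_real_def)
  qed (use d in auto)
qed

lemma z_rc: assumes t: "t > 0" shows "(z \<longlongrightarrow> z t) (at_right t)"
proof -
  define P where "P = (\<lambda>e \<eta>. \<forall>w. J w \<noteq> \<infinity> \<longrightarrow> Psi t + \<eta> \<bullet> (w - u t) \<le> Jr w + e)"
  define ee where "ee = (\<lambda>s. Psi t - Psi s + z s \<bullet> (u s - u t))"
  show ?thesis
  proof (rule eps_tendsto[where P=P and ee=ee])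
    fix e e' :: real and x assume "e \<le> e'" "P e x" then show "P e' x" by (force simp: P_def)
  next
    fix e :: real and x y assume "P e x" "P e y"
    then show "P e ((1/2) *\<^sub>R (x + y))"
      unfolding P_def
    proof (intro allI impI)
      fix w assume H: "\<forall>w. J w \<noteq> \<infinity> \<longrightarrow> Psi t + x \<bullet> (w - u t) \<le> Jr w + e"
        "\<forall>w. J w \<noteq> \<infinity> \<longrightarrow> Psi t + y \<bullet> (w - u t) \<le> Jr w + e" and w: "J w \<noteq> \<infinity>"
      have a: "Psi t + x \<bullet> (w - u t) \<le> Jr w + e" using H(1) w by blast
      have b: "Psi t + y \<bullet> (w - u t) \<le> Jr w + e" using H(2) w by blast
      have "((1/2) *\<^sub>R (x + y)) \<bullet> (w - u t) = (1/2) * (x \<bullet> (w - u t)) + (1/2) * (y \<bullet> (w - u t))"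
        by (simp add: inner_add_left algebra_simps)
      then show "Psi t + ((1/2) *\<^sub>R (x + y)) \<bullet> (w - u t) \<le> Jr w + e" using a b by linarith
    qed
  next
    fix X m assume lim: "X \<longlonglongrightarrow> m" and ev: "\<And>e. e > 0 \<Longrightarrow> \<forall>\<^sub>F n in sequentially. P e (X n)"
    show "P 0 m" unfolding P_def
    proof (intro allI impI)
      fix w assume w: "J w \<noteq> \<infinity>"
      show "Psi t + m \<bullet> (w - u t) \<le> Jr w + 0"
      proof (simp, rule field_le_epsilon)
        fix e :: real assume e: "e > 0"
        have l: "(\<lambda>n. Psi t + X n \<bullet> (w - u t)) \<longlonglongrightarrow> Psi t + m \<bullet> (w - u t)"
          by (intro tendsto_intros lim)
        have "\<forall>\<^sub>F n in sequentially. Psi t + X n \<bullet> (w - u t) \<le> Jr w + e"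
          using ev[OF e] by eventually_elim (use w in \<open>auto simp: P_def\<close>)
        then show "Psi t + m \<bullet> (w - u t) \<le> Jr w + e"
          by (rule tendsto_le[OF sequentially_bot tendsto_const l])
      qed
    qed
  next
    show "P 0 (z t)" using subgrad[OF z_sub[OF t]] by (simp add: P_def Psi_def)
  next
    fix x assume "P 0 x"
    then have "x \<in> subdiff J (u t)" using subgrad_iff[OF u_fin[OF t]] by (simp add: P_def Psi_def)
    then show "norm (z t) \<le> norm x" by (rule z_min[OF t])
  next
    have ev_pos: "\<forall>\<^sub>F s in at_right t. s > t" by (simp add: eventually_at_right_less)
    show ev: "\<forall>\<^sub>F s in at_right t. P (ee s) (z s)"
      using ev_pos
    proof eventually_elim
      case (elim s)
      show ?case unfolding P_def
      proof (intro allI impI)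
        fix w assume w: "J w \<noteq> \<infinity>"
        have "Jr (u s) + z s \<bullet> (w - u s) \<le> Jr w" using subgrad[OF z_sub w] elim t by simp
        then show "Psi t + z s \<bullet> (w - u t) \<le> Jr w + ee s"
          by (simp add: ee_def Psi_def inner_diff_right)
      qed
    qed
    show "\<forall>\<^sub>F s in at_right t. norm (z s) \<le> norm (z t)"
      using ev_pos by eventually_elim (use z_mono t in auto)
    show "(ee \<longlongrightarrow> 0) (at_right t)"
    proof (rule tendstoI)
      fix r :: real assume r: "r > 0"
      have e1: "\<forall>\<^sub>F s in at_right t. Psi t - r/2 < Psi s"
        using Psi_lsc[OF t, of "r/2"] r by (auto intro: filter_leD[OF at_le[of "{t<..}" UNIV], simplified])
      have "((\<lambda>s. norm (z t) * norm (u s - u t)) \<longlongrightarrow> norm (z t) * norm (u t - u t)) (at_right t)"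
        by (intro tendsto_intros u_tendsto t)
      then have e2: "\<forall>\<^sub>F s in at_right t. norm (z t) * norm (u s - u t) < r/2"
        using order_tendstoD(2)[of _ 0 _ "r/2"] r by auto
      from e1 e2 ev ev_pos show "\<forall>\<^sub>F s in at_right t. dist (ee s) 0 < r"
      proof eventually_elim
        case (elim s)
        have "ee s \<ge> 0" using elim(3) u_fin[OF t] by (auto simp: P_def Psi_def)
        have "z s \<bullet> (u s - u t) \<le> norm (z s) * norm (u s - u t)" by (rule norm_cauchy_schwarz)
        also have "\<dots> \<le> norm (z t) * norm (u s - u t)"
          using z_mono[of t s] elim t by (intro mult_right_mono) auto
        finally have "ee s < r" using elim by (simp add: ee_def)
        then show ?case using \<open>ee s \<ge> 0\<close> by (simp add: dist_real_def)
      qed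
    qed
  qed
qed

lemma Psi_Q_lim: "t > 0 \<Longrightarrow> ((\<lambda>s. z s \<bullet> ((1/(s-t)) *\<^sub>R (u s - u t))) \<longlongrightarrow> - ((norm (z t))^2)) (at_right t)"
  using tendsto_inner[OF z_rc q_lim, of t] by (simp add: power2_norm_eq_inner)

lemma Psi_bound: assumes "t > 0" shows "\<forall>\<^sub>F s in at_right t. Psi s - Psi t \<le> (s - t) * (z s \<bullet> ((1/(s-t)) *\<^sub>R (u s - u t)))"
  unfolding eventually_at_right_field
  by (intro exI[of _ "t+1"]) (use Psi_upper assms in auto)

lemma Psi_rc: assumes "t > 0" "e > 0" shows "\<exists>d>0. \<forall>y. t < y \<and> y < t + d \<longrightarrow> Psi y \<le> Psi t + e"
  by (rule rc_from_bound[OF Psi_Q_lim[OF assms(1)] Psi_bound[OF assms(1)] assms(2)])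

lemma Psi_mono: assumes "0 < s" "s \<le> t" shows "Psi t \<le> Psi s"
proof (rule dini[OF assms(2)])
  fix x e :: real assume x: "s < x" "x \<le> t" "e > 0"
  obtain d where d: "d > 0" "\<forall>y. \<bar>y - x\<bar> < d \<longrightarrow> Psi x - e < Psi y" using Psi_lsc2[of x e] x assms by auto
  show "\<exists>d>0. \<forall>y. s \<le> y \<and> y < x \<and> x - y < d \<longrightarrow> Psi x - e < Psi y"
    by (rule exI[of _ d]) (use d in auto)
next
  fix e :: real assume "e > 0" then show "\<exists>d>0. \<forall>y. s < y \<and> y < s + d \<longrightarrow> Psi y \<le> Psi s + e"
    using Psi_rc assms by auto
next
  fix x e :: real assume x: "s < x" "x < t" "e > 0"
  show "\<exists>d>0. \<forall>y. x < y \<and> y < x + d \<longrightarrow> Psi y \<le> Psi x + e * (y - x)"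
  proof -
    have x0: "x > 0" using x assms by simp
    show ?thesis by (rule der_bound[OF Psi_Q_lim[OF x0] _ Psi_bound[OF x0] x(3)]) simp
  qed
qed

lemma Df_der: assumes "x > 0"
  shows "((\<lambda>s. (norm (u s - f))^2) has_real_derivative (-2 * (z x \<bullet> (u x - f)))) (at x within {x<..})"
proof -
  have "((\<lambda>y. ((1/(y-x)) *\<^sub>R ((u y - f) - (u x - f))) \<bullet> ((u y - f) + (u x - f))) \<longlongrightarrow> (- z x) \<bullet> ((u x - f) + (u x - f))) (at_right x)"
    using q_lim[OF assms] by (intro tendsto_intros u_tendsto assms) simp_all
  moreover have "(\<lambda>y. ((1/(y-x)) *\<^sub>R ((u y - f) - (u x - f))) \<bullet> ((u y - f) + (u x - f))) = (\<lambda>y. ((norm (u y - f))^2 - (norm (u x - f))^2) / (y - x))"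
    by (rule ext, rule sqdiff)
  moreover have "(- z x) \<bullet> ((u x - f) + (u x - f)) = -2 * (z x \<bullet> (u x - f))" by (simp add: inner_add_right)
  ultimately show ?thesis by (simp add: has_field_derivative_iff)
qed

lemma Psi_le_f: assumes Jf: "J f \<noteq> \<infinity>" and t: "t > 0" shows "Psi t \<le> Jr f"
proof -
  define F where "F = (\<lambda>s. (1/2) * (norm (u s - f))^2 - s * Jr f + s * Psi t)"
  have "F t \<le> F 0"
  proof (rule dini_cont[where F=F])
    show "continuous_on {0..t} F" unfolding F_def by (intro continuous_intros u_cont_sub) auto
  next
    fix x e :: real assume x: "0 < x" "x < t" "e > 0"
    have der: "(F has_real_derivative ((1/2) * (-2 * (z x \<bullet> (u x - f))) - Jr f + Psi t)) (at x within {x<..})"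
      unfolding F_def by (rule derivative_eq_intros Df_der[OF x(1)] | simp)+
    have "Jr (u x) + z x \<bullet> (f - u x) \<le> Jr f" by (rule subgrad[OF z_sub[OF x(1)] Jf])
    moreover have "Psi t \<le> Psi x" using Psi_mono x by auto
    ultimately have "(1/2) * (-2 * (z x \<bullet> (u x - f))) - Jr f + Psi t \<le> 0"
      by (simp add: Psi_def inner_diff_right field_simps)
    then show "\<exists>d>0. \<forall>y. x < y \<and> y < x + d \<longrightarrow> F y \<le> F x + e * (y - x)"
      using der_deriv[OF der _ x(3)] by blast
  qed (use t in auto)
  then have "(1/2) * (norm (u t - f))^2 \<le> t * (Jr f - Psi t)" by (simp add: F_def u0 algebra_simps)
  moreover have "0 \<le> (1/2) * (norm (u t - f))^2" by simp
  ultimately have "0 \<le> t * (Jr f - Psi t)" by linarith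
  then show ?thesis using t by (simp add: zero_le_mult_iff)
qed

end


lemma sq_powr: "0 \<le> a \<Longrightarrow> ((a::real)^2) powr (q/2) = a powr q"
proof (cases "a = 0")
  case True then show ?thesis by simp
next
  case False
  assume "0 \<le> a" then have a: "a > 0" using False by simp
  have "a^2 = a powr 2" using powr_realpow[OF a, of 2] by simp
  then show ?thesis by (simp add: powr_powr)
qed

lemma dini_cond_cont:
  fixes F :: "real \<Rightarrow> real"
  assumes ab: "a \<le> b" and Fa: "F a \<le> 0" and cont: "continuous_on {a..b} F"
  and der: "\<And>x e. a < x \<Longrightarrow> x < b \<Longrightarrow> F x > 0 \<Longrightarrow> e > 0 \<Longrightarrow> \<exists>d>0. \<forall>y. x < y \<and> y < x + d \<longrightarrow> F y \<le> F x + e * (y - x)"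
  shows "F b \<le> 0"
proof (rule dini_cond[OF ab Fa _ _ der])
  fix x e :: real assume x: "a \<le> x" "x \<le> b" "e > 0"
  then obtain d where d: "d>0" "\<forall>x'\<in>{a..b}. dist x' x < d \<longrightarrow> dist (F x') (F x) < e"
    using cont unfolding continuous_on_iff by (meson atLeastAtMost_iff)
  show "\<exists>d>0. \<forall>y. a \<le> y \<and> y \<le> b \<and> \<bar>y - x\<bar> < d \<longrightarrow> F x - e < F y"
  proof (intro exI[of _ d] conjI allI impI)
    fix y assume y: "a \<le> y \<and> y \<le> b \<and> \<bar>y - x\<bar> < d"
    then have "\<bar>F y - F x\<bar> < e" using d(2)[rule_format, of y] by (auto simp: dist_real_def)
    then show "F x - e < F y" by linarith
  qed (use d in auto)
next
  fix x e :: real assume x: "a \<le> x" "x < b" "e > 0"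
  then obtain d where d: "d>0" "\<forall>x'\<in>{a..b}. dist x' x < d \<longrightarrow> dist (F x') (F x) < e"
    using cont unfolding continuous_on_iff by (meson atLeastAtMost_iff less_imp_le)
  show "\<exists>d>0. \<forall>y. x < y \<and> y < x + d \<longrightarrow> F y \<le> F x + e"
  proof (intro exI[of _ "min d (b - x)"] conjI allI impI)
    fix y assume y: "x < y \<and> y < x + min d (b - x)"
    then have "\<bar>F y - F x\<bar> < e" using d(2)[rule_format, of y] x by (auto simp: dist_real_def)
    then show "F y \<le> F x + e" by linarith
  qed (use d x in auto)
qed

context gf begin

lemma N_der: assumes x: "x > 0" "u x \<noteq> 0"
  shows "((\<lambda>s. norm (u s) powr p) has_real_derivative ((p/2) * ((norm (u x))^2) powr (p/2 - 1) * (-2*p*Psi x))) (at x within {x<..})"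
proof -
  have g: "(norm (u x))^2 > 0" using x by simp
  have "((\<lambda>s. ((norm (u s))^2) powr (p/2)) has_real_derivative ((p/2) * ((norm (u x))^2) powr (p/2 - 1) * (-2*p*Psi x))) (at x within {x<..})"
    by (rule DERIV_chain2[OF has_real_derivative_powr[OF g] G_der[OF x(1)]])
  moreover have "(\<lambda>s. ((norm (u s))^2) powr (p/2)) = (\<lambda>s. norm (u s) powr p)" by (rule ext, rule sq_powr) simp
  ultimately show ?thesis by simp
qed

lemma N_cont: "0 \<le> a \<Longrightarrow> continuous_on {a..b} (\<lambda>s. norm (u s) powr p)"
proof -
  assume a: "0 \<le> a"
  have "continuous_on {a..b} (\<lambda>s. ((norm (u s))^2) powr (p/2))"
    by (intro continuous_on_powr' G_cont a continuous_on_const) (use p2 in auto)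
  moreover have "(\<lambda>s. ((norm (u s))^2) powr (p/2)) = (\<lambda>s. norm (u s) powr p)" by (rule ext, rule sq_powr) simp
  ultimately show ?thesis by metis
qed

lemma lam_mono: assumes d: "0 < \<delta>" "\<delta> \<le> t" "u \<delta> \<noteq> 0"
  shows "p * Psi t \<le> (p * Psi \<delta> / norm (u \<delta>) powr p) * norm (u t) powr p"
proof -
  define Ld where "Ld = p * Psi \<delta> / norm (u \<delta>) powr p"
  define N where "N = (\<lambda>s. norm (u s) powr p)"
  define F where "F = (\<lambda>s. p * Psi s - Ld * N s)"
  have Ld0: "Ld \<ge> 0" using Psi_nonneg[of \<delta>] p2 by (simp add: Ld_def)
  have p0: "p > 0" using p2 by simp
  have "F t \<le> 0"
  proof (rule dini_cond[where F=F, OF d(2)])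
    show "F \<delta> \<le> 0" using d by (simp add: F_def Ld_def N_def)
  next
    fix x e :: real assume x: "\<delta> \<le> x" "x \<le> t" "e > 0"
    have x0: "x > 0" using x d by simp
    obtain d1 where d1: "d1 > 0" "\<forall>y. \<bar>y - x\<bar> < d1 \<longrightarrow> Psi x - e/(2*p) < Psi y"
      using Psi_lsc2[OF x0, of "e/(2*p)"] x p0 by auto
    have "continuous_on {\<delta>..t} N" unfolding N_def using N_cont d by simp
    then obtain d2 where d2: "d2>0" "\<forall>x'\<in>{\<delta>..t}. dist x' x < d2 \<longrightarrow> dist (N x') (N x) < e/(2*(Ld+1))"
      using x Ld0 unfolding continuous_on_iff by (metis atLeastAtMost_iff divide_pos_pos add_nonneg_pos zero_less_one zero_less_numeral mult_pos_pos)
    show "\<exists>d>0. \<forall>y. \<delta> \<le> y \<and> y \<le> t \<and> \<bar>y - x\<bar> < d \<longrightarrow> F x - e < F y"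
    proof (intro exI[of _ "min d1 d2"] conjI allI impI)
      fix y assume y: "\<delta> \<le> y \<and> y \<le> t \<and> \<bar>y - x\<bar> < min d1 d2"
      have a: "Psi x - e/(2*p) < Psi y" using d1 y by auto
      have b: "\<bar>N y - N x\<bar> < e/(2*(Ld+1))" using d2(2)[rule_format, of y] y by (auto simp: dist_real_def)
      have "p * Psi x - e/2 < p * Psi y" using a p0 by (simp add: field_simps)
      moreover have "Ld * N y - Ld * N x \<le> e/2"
      proof -
        have "Ld * N y - Ld * N x \<le> Ld * \<bar>N y - N x\<bar>" using Ld0 by (simp add: right_diff_distrib[symmetric] abs_ge_self mult_left_mono)
        also have "\<dots> \<le> (Ld + 1) * (e/(2*(Ld+1)))" using b Ld0 by (intro mult_mono) auto
        also have "\<dots> = e/2" using Ld0 by (simp add: field_simps)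
        finally show ?thesis .
      qed
      ultimately show "F x - e < F y" by (simp add: F_def)
    qed (use d1 d2 in auto)
  next
    fix x e :: real assume x: "\<delta> \<le> x" "x < t" "e > 0"
    have x0: "x > 0" using x d by simp
    obtain d1 where d1: "d1 > 0" "\<forall>y. x < y \<and> y < x + d1 \<longrightarrow> Psi y \<le> Psi x + e/(2*p)"
      using Psi_rc[OF x0, of "e/(2*p)"] x p0 by auto
    have "continuous_on {\<delta>..t} N" unfolding N_def using N_cont d by simp
    then obtain d2 where d2: "d2>0" "\<forall>x'\<in>{\<delta>..t}. dist x' x < d2 \<longrightarrow> dist (N x') (N x) < e/(2*(Ld+1))"
      using x Ld0 unfolding continuous_on_iff by (metis atLeastAtMost_iff less_imp_le divide_pos_pos add_nonneg_pos zero_less_one zero_less_numeral mult_pos_pos)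
    show "\<exists>d>0. \<forall>y. x < y \<and> y < x + d \<longrightarrow> F y \<le> F x + e"
    proof (intro exI[of _ "min (min d1 d2) (t - x)"] conjI allI impI)
      fix y assume y: "x < y \<and> y < x + min (min d1 d2) (t - x)"
      have a: "Psi y \<le> Psi x + e/(2*p)" using d1 y by auto
      have b: "\<bar>N y - N x\<bar> < e/(2*(Ld+1))" using d2(2)[rule_format, of y] y x by (auto simp: dist_real_def)
      have "p * Psi y \<le> p * Psi x + e/2" using a p0 by (simp add: field_simps)
      moreover have "Ld * N x - Ld * N y \<le> e/2"
      proof -
        have "Ld * N x - Ld * N y \<le> Ld * \<bar>N y - N x\<bar>" using Ld0
          by (simp add: right_diff_distrib[symmetric] mult_left_mono) 
        also have "\<dots> \<le> (Ld + 1) * (e/(2*(Ld+1)))" using b Ld0 by (intro mult_mono) auto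
        also have "\<dots> = e/2" using Ld0 by (simp add: field_simps)
        finally show ?thesis .
      qed
      ultimately show "F y \<le> F x + e" by (simp add: F_def)
    qed (use d1 d2 x in auto)
  next
    fix x e :: real assume x: "\<delta> < x" "x < t" "F x > 0" "e > 0"
    have x0: "x > 0" using x d by simp
    have ux: "u x \<noteq> 0"
    proof
      assume "u x = 0"
      then have "Psi x = 0" using J0 by (simp add: Psi_def Jr_def)
      then show False using x(3) p2 \<open>u x = 0\<close> by (simp add: F_def N_def)
    qed
    define g where "g = (norm (u x))^2"
    have g0: "g > 0" using ux by (simp add: g_def)
    define Q where "Q = (\<lambda>s. p * (z s \<bullet> ((1/(s-x)) *\<^sub>R (u s - u x))) - Ld * ((N s - N x) / (s - x)))"
    define L where "L = p * (- ((norm (z x))^2)) - Ld * ((p/2) * g powr (p/2 - 1) * (-2*p*Psi x))"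
    have QL: "(Q \<longlongrightarrow> L) (at_right x)"
      unfolding Q_def L_def g_def
      by (intro tendsto_intros Psi_Q_lim[OF x0] has_field_derivativeD[OF N_der[OF x0 ux, folded N_def]])
    have bnd: "\<forall>\<^sub>F s in at_right x. F s - F x \<le> (s - x) * Q s"
      using Psi_bound[OF x0]
    proof eventually_elim
      case (elim s)
      show ?case
      proof (cases "s = x")
        case True then show ?thesis by simp
      next
        case False
        have "F s - F x = p * (Psi s - Psi x) - Ld * (N s - N x)" by (simp add: F_def algebra_simps)
        also have "\<dots> \<le> p * ((s - x) * (z s \<bullet> ((1/(s-x)) *\<^sub>R (u s - u x)))) - Ld * (N s - N x)"
          using elim p0 by (intro diff_right_mono mult_left_mono) auto
        also have "\<dots> = (s - x) * Q s"
        proof -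
          have sx: "s - x \<noteq> 0" using False by simp
          have "(s - x) * ((N s - N x) / (s - x)) = N s - N x" using sx by simp
          moreover have "(s - x) * Q s = p * ((s - x) * (z s \<bullet> ((1/(s-x)) *\<^sub>R (u s - u x)))) - Ld * ((s - x) * ((N s - N x) / (s - x)))"
            unfolding Q_def by (simp only: right_diff_distrib mult.left_commute)
          ultimately show ?thesis by simp
        qed
        finally show ?thesis .
      qed
    qed
    have L0: "L \<le> 0"
    proof -
      define P where "P = Psi x"
      define n where "n = norm (z x)"
      have P0: "P \<ge> 0" using Psi_nonneg by (simp add: P_def)
      have Fx: "Ld * g powr (p/2) < p * P" using x(3) sq_powr[of "norm (u x)" p] by (simp add: F_def N_def g_def P_def)
      have cs: "(p * P)^2 \<le> n^2 * g"
      proof -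
        have "\<bar>z x \<bullet> u x\<bar> \<le> norm (z x) * norm (u x)" by (rule Cauchy_Schwarz_ineq2)
        then have "\<bar>z x \<bullet> u x\<bar>^2 \<le> (norm (z x) * norm (u x))^2" by (intro power_mono) auto
        then have "(z x \<bullet> u x)^2 \<le> (norm (z x) * norm (u x))^2" by simp
        then show ?thesis using euler_t[OF x0] by (simp add: P_def n_def g_def power_mult_distrib)
      qed
      have gp: "g powr (p/2 - 1) = g powr (p/2) / g" using g0 by (simp add: powr_diff)
      have "Ld * ((p/2) * g powr (p/2 - 1) * (2*p*P)) = (Ld * g powr (p/2)) * (p^2 * P / g)"
        unfolding gp using g0 by (simp add: power2_eq_square field_simps)
      also have "\<dots> \<le> (p * P) * (p^2 * P / g)"
        using Fx P0 g0 p0 by (intro mult_right_mono) auto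
      also have "\<dots> = p * ((p * P)^2 / g)" by (simp add: power2_eq_square field_simps)
      also have "\<dots> \<le> p * n^2"
        using cs g0 p0 by (intro mult_left_mono) (auto simp: divide_le_eq)
      finally show ?thesis by (simp add: L_def P_def n_def)
    qed
    show "\<exists>d>0. \<forall>y. x < y \<and> y < x + d \<longrightarrow> F y \<le> F x + e * (y - x)"
      by (rule der_bound[OF QL L0 bnd x(4)])
  qed
  then show ?thesis by (simp add: F_def Ld_def N_def)
qed

end


context gf begin

lemma lower_cmp: assumes p: "p > 2" and d: "0 < \<delta>" "\<delta> \<le> t" "u \<delta> \<noteq> 0"
  shows "(norm (u \<delta>) powr (-(p-2)) + (p-2) * (p * Psi \<delta> / norm (u \<delta>) powr p) * (t - \<delta>)) powr (-2/(p-2)) \<le> (norm (u t))^2"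
proof -
  define k where "k = p - 2"
  define X where "X = norm (u \<delta>)"
  define Ld where "Ld = p * Psi \<delta> / X powr p"
  define B where "B = (\<lambda>s. X powr (-k) + k * Ld * (s - \<delta>))"
  define F where "F = (\<lambda>s. B s powr (-2/k) - (norm (u s))^2)"
  have k: "k > 0" using p by (simp add: k_def)
  have X: "X > 0" using d by (simp add: X_def)
  have Ld0: "Ld \<ge> 0" using Psi_nonneg[of \<delta>] p by (simp add: Ld_def)
  have Bpos: "B s > 0" if "s \<ge> \<delta>" for s
  proof -
    have a: "X powr (-k) > 0" using X by simp
    have b: "k * Ld * (s - \<delta>) \<ge> 0" using k Ld0 that by simp
    show ?thesis unfolding B_def by (rule add_pos_nonneg[OF a b])
  qed
  have "F t \<le> 0"
  proof (rule dini_cond_cont[where F=F, OF d(2)])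
    have "(X powr (-k)) powr (-2/k) = X powr 2" using k by (simp add: powr_powr)
    then show "F \<delta> \<le> 0" using X by (simp add: F_def B_def X_def powr_realpow[of _ 2, simplified])
  next
    have cp: "\<forall>x\<in>{\<delta>..t}. B x \<ge> 0 \<and> (B x = 0 \<longrightarrow> -2/k > 0)" using Bpos by force
    have cc: "continuous_on {\<delta>..t} B" unfolding B_def by (intro continuous_intros)
    show "continuous_on {\<delta>..t} F" unfolding F_def
      by (intro continuous_intros continuous_on_powr'[OF cc _ cp] G_cont) (use d in auto)
  next
    fix x e :: real assume x: "\<delta> < x" "x < t" "F x > 0" "e > 0"
    have x0: "x > 0" using x d by simp
    have Bx: "B x > 0" using Bpos x by simp
    have dB: "(B has_real_derivative k * Ld) (at x)" unfolding B_def by (rule derivative_eq_intros | simp)+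
    have der: "(F has_real_derivative ((-2/k) * B x powr (-2/k - 1) * (k * Ld) - (-2*p*Psi x))) (at x within {x<..})"
      unfolding F_def
      by (intro derivative_intros G_der[OF x0] has_field_derivative_at_within[OF DERIV_fun_powr[OF dB Bx, simplified]])
    have L0: "(-2/k) * B x powr (-2/k - 1) * (k * Ld) - (-2*p*Psi x) \<le> 0"
    proof -
      have e1: "-2/k - 1 = -p/k" using k by (simp add: k_def field_simps)
      have lm: "p * Psi x \<le> Ld * norm (u x) powr p" using lam_mono[OF d(1) less_imp_le[OF x(1)] d(3)] by (simp add: Ld_def X_def)
      have "(norm (u x))^2 < B x powr (-2/k)" using x(3) by (simp add: F_def)
      then have "((norm (u x))^2) powr (p/2) \<le> (B x powr (-2/k)) powr (p/2)" using p by (intro powr_mono2) auto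
      then have "norm (u x) powr p \<le> B x powr (-p/k)" by (simp add: sq_powr powr_powr)
      then have "Ld * norm (u x) powr p \<le> Ld * B x powr (-p/k)" using Ld0 by (rule mult_left_mono)
      then have "p * Psi x \<le> Ld * B x powr (-p/k)" using lm by simp
      moreover have "(-2/k) * B x powr (-2/k - 1) * (k * Ld) = -2 * Ld * B x powr (-p/k)" using k unfolding e1 by simp
      ultimately show ?thesis by simp
    qed
    show "\<exists>d>0. \<forall>y. x < y \<and> y < x + d \<longrightarrow> F y \<le> F x + e * (y - x)"
      by (rule der_deriv[OF der L0 x(4)])
  qed
  then show ?thesis by (simp add: F_def B_def k_def X_def Ld_def)
qed

definition lamL where "lamL = l1 * norm f powr (p - 2)"

lemma lamL_pos: "lamL > 0" using l1 f by (simp add: lamL_def H0_def)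

lemma upper_gt2: assumes p: "p > 2" and t: "t \<ge> 0"
  shows "(norm (u t))^2 * (1 + (p-2)*lamL*t) powr (2/(p-2)) \<le> (norm f)^2"
proof -
  define k where "k = p - 2"
  define c where "c = (\<lambda>s. 1 + k*lamL* s)"
  define F where "F = (\<lambda>s. (norm (u s))^2 * c s powr (2/k) - (norm f)^2)"
  have k: "k > 0" using p by (simp add: k_def)
  have cpos: "c s > 0" if "s \<ge> 0" for s
    using lamL_pos k that by (simp add: c_def add_pos_nonneg)
  have "F t \<le> 0"
  proof (rule dini_cond_cont[where F=F, OF t])
    show "F 0 \<le> 0" by (simp add: F_def c_def u0)
  next
    have cp: "\<forall>x\<in>{0..t}. c x \<ge> 0 \<and> (c x = 0 \<longrightarrow> 2/k > 0)" using cpos by force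
    have cc: "continuous_on {0..t} c" unfolding c_def by (intro continuous_intros)
    show "continuous_on {0..t} F" unfolding F_def
      by (intro continuous_intros continuous_on_powr'[OF cc _ cp] G_cont) auto
  next
    fix x e :: real assume x: "0 < x" "x < t" "F x > 0" "e > 0"
    define C where "C = c x"
    define g where "g = (norm (u x))^2"
    have C: "C > 0" using cpos x by (simp add: C_def)
    have dc: "(c has_real_derivative k * lamL) (at x)" unfolding c_def by (rule derivative_eq_intros | simp)+
    have d0: "((\<lambda>s. c s powr (2/k)) has_real_derivative (2/k) * c x powr (2/k - of_nat 1) * (k*lamL)) (at x)"
      by (rule DERIV_fun_powr[OF dc]) (use cpos x in auto)
    have dcp: "((\<lambda>s. c s powr (2/k)) has_real_derivative (2/k * c x powr (2/k - 1) * (k*lamL))) (at x within {x<..})"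
      using has_field_derivative_at_within[OF d0] by (simp only: of_nat_1)
    have der: "(F has_real_derivative ((-2*p*Psi x) * c x powr (2/k) + (2/k * c x powr (2/k - 1) * (k*lamL)) * (norm (u x))^2)) (at x within {x<..})"
      unfolding F_def using DERIV_diff[OF DERIV_mult[OF G_der[OF x(1)] dcp] DERIV_const[of "(norm f)^2"]] by simp
    have L0: "(-2*p*Psi x) * c x powr (2/k) + (2/k * c x powr (2/k - 1) * (k*lamL)) * (norm (u x))^2 \<le> 0"
    proof -
      have Fx: "g * C powr (2/k) > (norm f)^2" using x(3) by (simp add: F_def g_def C_def)
      have g0: "g \<ge> 0" by (simp add: g_def)
      have coer: "l1 * g powr (p/2) \<le> p * Psi x" using coercive_t[OF x(1)] sq_powr[of "norm (u x)" p] by (simp add: g_def)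
      have "((norm f)^2) powr (k/2) \<le> (g * C powr (2/k)) powr (k/2)" using Fx k by (intro powr_mono2) auto
      then have fk: "norm f powr k \<le> g powr (k/2) * C" using C k g0 by (simp add: sq_powr powr_mult powr_powr)
      have gsplit: "g powr (p/2) = g * g powr (k/2)"
      proof (cases "g = 0")
        case True then show ?thesis using p by simp
      next
        case False
        then have "g powr (p/2) = g powr (1 + k/2)" by (simp add: k_def field_simps)
        also have "\<dots> = g * g powr (k/2)" using False g0 by (simp add: powr_add)
        finally show ?thesis .
      qed
      have Csplit: "C powr (2/k) = C * C powr (2/k - 1)" using C by (simp add: powr_diff)
      have "lamL * g * C powr (2/k - 1) = l1 * norm f powr k * g * C powr (2/k - 1)" by (simp add: lamL_def k_def)
      also have "\<dots> \<le> l1 * (g powr (k/2) * C) * g * C powr (2/k - 1)"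
        using fk l1(2) g0 C by (intro mult_right_mono mult_left_mono) auto
      also have "\<dots> = l1 * g powr (p/2) * C powr (2/k)" by (simp add: gsplit Csplit)
      also have "\<dots> \<le> p * Psi x * C powr (2/k)" using coer C by (intro mult_right_mono) auto
      finally have main: "lamL * g * C powr (2/k - 1) \<le> p * Psi x * C powr (2/k)" .
      have eq: "(2/k * c x powr (2/k - 1) * (k*lamL)) * (norm (u x))^2 = 2 * (lamL * g * C powr (2/k - 1))"
        using k by (simp add: C_def g_def field_simps)
      have "(-2*p*Psi x) * c x powr (2/k) = -2 * (p * Psi x * C powr (2/k))" by (simp add: C_def)
      then show ?thesis using main eq by linarith
    qed
    show "\<exists>d>0. \<forall>y. x < y \<and> y < x + d \<longrightarrow> F y \<le> F x + e * (y - x)"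
      by (rule der_deriv[OF der L0 x(4)])
  qed
  then show ?thesis by (simp add: F_def c_def k_def)
qed

lemma upper_eq2: assumes p: "p = 2" and st: "0 \<le> s" "s \<le> t"
  shows "(norm (u t))^2 * exp (2*l1*t) \<le> (norm (u s))^2 * exp (2*l1* s)"
proof (rule dini_cont[where F="\<lambda>r. (norm (u r))^2 * exp (2*l1*r)", OF st(2)])
  show "continuous_on {s..t} (\<lambda>r. (norm (u r))^2 * exp (2*l1*r))"
    by (intro continuous_intros G_cont st)
next
  fix x e :: real assume x: "s < x" "x < t" "e > 0"
  have x0: "x > 0" using x st by simp
  have dE: "((\<lambda>r. exp (2*l1*r)) has_real_derivative exp (2*l1*x) * (2*l1)) (at x within {x<..})"
    by (auto intro!: derivative_eq_intros)
  have der: "((\<lambda>r. (norm (u r))^2 * exp (2*l1*r)) has_real_derivative ((-2*p*Psi x) * exp (2*l1*x) + (exp (2*l1*x) * (2*l1)) * (norm (u x))^2)) (at x within {x<..})"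
    by (rule DERIV_mult[OF G_der[OF x0] dE])
  have "l1 * norm (u x) powr 2 \<le> 2 * Psi x" using coercive_t[OF x0] p by simp
  moreover have "norm (u x) powr 2 = (norm (u x))^2" using sq_powr[of "norm (u x)" 2] by simp
  ultimately have "l1 * (norm (u x))^2 \<le> 2 * Psi x" by simp
  then have "(-2*p*Psi x) * exp (2*l1*x) + (exp (2*l1*x) * (2*l1)) * (norm (u x))^2 = 2 * exp (2*l1*x) * (l1 * (norm (u x))^2 - 2 * Psi x)"
    and "2 * exp (2*l1*x) * (l1 * (norm (u x))^2 - 2 * Psi x) \<le> 0"
    using p by (auto simp: algebra_simps mult_nonneg_nonpos)
  then have L0: "(-2*p*Psi x) * exp (2*l1*x) + (exp (2*l1*x) * (2*l1)) * (norm (u x))^2 \<le> 0" by simp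
  show "\<exists>d>0. \<forall>y. x < y \<and> y < x + d \<longrightarrow> (norm (u y))^2 * exp (2*l1*y) \<le> (norm (u x))^2 * exp (2*l1*x) + e * (y - x)"
    by (rule der_deriv[OF der L0 x(3)])
qed

end


context gf begin

definition W where "W t = (1 / a_fun p lamL t) *\<^sub>R u t"

lemma W_norm_gt2: assumes p: "p > 2" and t: "t \<ge> 0"
  shows "norm (W t) = norm (u t) * (1 + (p-2)*lamL*t) powr (1/(p-2))"
proof -
  have c: "1 + (p-2)*lamL*t > 0" using p t lamL_pos by (simp add: add_pos_nonneg)
  have "a_fun p lamL t = (1 + (p-2)*lamL*t) powr (-1/(p-2))" using p by (simp add: a_fun_def)
  moreover have "1 / (1 + (p-2)*lamL*t) powr (-1/(p-2)) = (1 + (p-2)*lamL*t) powr (1/(p-2))"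
  proof -
    have "(1 + (p-2)*lamL*t) powr (-1/(p-2)) * (1 + (p-2)*lamL*t) powr (1/(p-2)) = 1"
      using c by (simp add: powr_add[symmetric])
    moreover have "(1 + (p-2)*lamL*t) powr (-1/(p-2)) > 0" using c by simp
    ultimately show ?thesis by (simp add: field_simps)
  qed
  ultimately show ?thesis using c by (simp add: W_def)
qed

lemma upper_final_gt2: assumes p: "p > 2" and t: "t \<ge> 0"
  shows "norm (W t) \<le> norm f"
proof -
  define c where "c = 1 + (p-2)*lamL*t"
  have c: "c > 0" using p t lamL_pos by (simp add: c_def add_pos_nonneg)
  have "(norm (W t))^2 = (norm (u t))^2 * (c powr (1/(p-2)))^2"
    using W_norm_gt2[OF p t] by (simp add: c_def power_mult_distrib)
  also have "(c powr (1/(p-2)))^2 = c powr (2/(p-2))"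
    using c by (simp add: power2_eq_square powr_add[symmetric])
  finally have "(norm (W t))^2 \<le> (norm f)^2" using upper_gt2[OF p t] by (simp add: c_def)
  then show ?thesis by (simp add: power_mono_iff)
qed

lemma wpow: assumes p: "p > 2" and t: "t \<ge> 0"
  shows "norm (W t) powr (p-2) = norm (u t) powr (p-2) * (1 + (p-2)*lamL*t)"
proof -
  define c where "c = 1 + (p-2)*lamL*t"
  have c: "c > 0" using p t lamL_pos by (simp add: c_def add_pos_nonneg)
  have "norm (W t) powr (p-2) = norm (u t) powr (p-2) * (c powr (1/(p-2))) powr (p-2)"
    using W_norm_gt2[OF p t] c by (simp add: c_def powr_mult)
  also have "(c powr (1/(p-2))) powr (p-2) = c" using p c by (simp add: powr_powr)
  finally show ?thesis by (simp add: c_def)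
qed

lemma lower_final_gt2: assumes p: "p > 2" and d: "0 < \<delta>" "\<delta> \<le> t"
  shows "l1 * norm (u \<delta>) powr (p - 2) / rayleigh p J (u \<delta>) \<le> norm (W t) powr (p - 2)"
proof (cases "u \<delta> = 0")
  case True then show ?thesis using p by simp
next
  case False
  define k where "k = p - 2"
  define X where "X = norm (u \<delta>)"
  define Ld where "Ld = p * Psi \<delta> / X powr p"
  define Bt where "Bt = X powr (-k) + k * Ld * (t - \<delta>)"
  define c where "c = 1 + k*lamL*t"
  have k: "k > 0" using p by (simp add: k_def)
  have X: "X > 0" using False by (simp add: X_def)
  have ray: "rayleigh p J (u \<delta>) = Ld" by (simp add: rayleigh_def Ld_def X_def Psi_def Jr_def)
  have Ld1: "l1 \<le> Ld" using coercive_t[OF d(1)] X by (simp add: Ld_def X_def pos_le_divide_eq)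
  have Ld0: "Ld > 0" using Ld1 l1(2) by simp
  have Bt: "Bt > 0"
  proof -
    have a: "X powr (-k) > 0" using X by simp
    have b: "k * Ld * (t - \<delta>) \<ge> 0" using k Ld0 d by simp
    show ?thesis unfolding Bt_def by (rule add_pos_nonneg[OF a b])
  qed
  have c: "c > 0" using k d lamL_pos by (simp add: c_def add_pos_nonneg)
  have lc: "Bt powr (-2/k) \<le> (norm (u t))^2"
    using lower_cmp[OF p d False] by (simp add: Bt_def k_def X_def Ld_def)
  have "(Bt powr (-2/k)) powr (k/2) \<le> ((norm (u t))^2) powr (k/2)" using lc k by (intro powr_mono2) auto
  moreover have "(Bt powr (-2/k)) powr (k/2) = Bt powr (-1)" using k by (simp add: powr_powr)
  moreover have "Bt powr (-1) = 1 / Bt" using Bt by (simp add: powr_minus_divide)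
  moreover have "((norm (u t))^2) powr (k/2) = norm (u t) powr k" by (rule sq_powr) simp
  ultimately have ut: "1 / Bt \<le> norm (u t) powr k" by simp
  have wt: "norm (W t) powr k = norm (u t) powr k * c" using wpow[OF p] d by (simp add: k_def c_def)
  have Xf: "X powr k \<le> norm f powr k" using norm_mono[of 0 \<delta>] d k by (intro powr_mono2) (auto simp: X_def u0)
  have key: "l1 * X powr k * Bt \<le> Ld * c"
  proof -
    have e: "X powr k * Bt = 1 + k * Ld * (t - \<delta>) * X powr k"
      using X by (simp add: Bt_def distrib_left powr_add[symmetric])
    have "l1 * X powr k * Bt = l1 * (X powr k * Bt)" by (simp add: mult.assoc)
    also have "\<dots> = l1 * (1 + k * Ld * (t - \<delta>) * X powr k)" by (simp only: e)
    also have "\<dots> = l1 + k * Ld * (t - \<delta>) * (l1 * X powr k)" by (simp add: algebra_simps)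
    finally have "l1 * X powr k * Bt = l1 + k * Ld * (t - \<delta>) * (l1 * X powr k)" .
    also have "\<dots> \<le> Ld + k * Ld * (t - \<delta>) * (l1 * norm f powr k)"
      using Ld1 Xf l1(2) k Ld0 d by (intro add_mono mult_left_mono) auto
    also have "\<dots> \<le> Ld + k * Ld * t * (l1 * norm f powr k)"
      using k Ld0 d l1(2) by (intro add_mono mult_right_mono mult_left_mono) auto
    also have "\<dots> = Ld * c" by (simp add: c_def lamL_def k_def algebra_simps)
    finally show ?thesis .
  qed
  have "l1 * X powr k / Ld \<le> c / Bt" using key Ld0 Bt by (simp add: divide_le_eq le_divide_eq mult.commute mult.left_commute)
  also have "\<dots> = (1 / Bt) * c" by simp
  also have "\<dots> \<le> norm (u t) powr k * c" using ut c by (intro mult_right_mono) auto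
  finally show ?thesis using wt ray by (simp add: X_def k_def)
qed

lemma W0: "W 0 = f" by (simp add: W_def a_fun_def u0)

lemma lower_final_0: assumes p: "p > 2" and Jf: "J f < \<infinity>" and t: "t \<ge> 0"
  shows "l1 * norm f powr (p - 2) / rayleigh p J f \<le> norm (W t) powr (p - 2)"
proof -
  define k where "k = p - 2"
  have k: "k > 0" using p by (simp add: k_def)
  have Jf': "J f \<noteq> \<infinity>" using Jf by simp
  have fpos: "norm f > 0" using f by (simp add: H0_def)
  define Rf where "Rf = p * Jr f / norm f powr p"
  have ray: "rayleigh p J f = Rf" by (simp add: rayleigh_def Rf_def Jr_def)
  have np: "norm f powr p > 0" using fpos by simp
  have Rf1: "l1 \<le> Rf" unfolding Rf_def using coercive[OF f Jf'] by (simp add: pos_le_divide_eq[OF np])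
  have Jfpos: "Jr f > 0"
  proof -
    have "l1 * norm f powr p > 0" using l1(2) fpos by simp
    then have "0 < p * Jr f" using coercive[OF f Jf'] by linarith
    then show ?thesis using p by (simp add: zero_less_mult_iff)
  qed
  have Rf0: "Rf > 0" using Rf1 l1(2) by simp
  show ?thesis
  proof (cases "t = 0")
    case True
    have "l1 * norm f powr k / Rf \<le> 1 * norm f powr k"
      using Rf1 Rf0 by (simp add: divide_le_eq mult.commute mult_right_mono)
    then show ?thesis using True W0 ray by (simp add: k_def)
  next
    case False
    then have t0: "t > 0" using t by simp
    define h where "h = (\<lambda>\<delta>. l1 * norm (u \<delta>) powr k * norm (u \<delta>) powr p / (p * Jr f))"
    have hlim: "(h \<longlongrightarrow> l1 * norm f powr k * norm f powr p / (p * Jr f)) (at_right 0)"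
      unfolding h_def using fpos Jfpos p by (intro tendsto_intros u_tendsto0) auto
    have ev: "\<forall>\<^sub>F \<delta> in at_right 0. h \<delta> \<le> norm (W t) powr k"
    proof -
      have e1: "\<forall>\<^sub>F \<delta> in at_right 0. u \<delta> \<noteq> 0"
        using tendsto_imp_eventually_ne[OF u_tendsto0, of 0] fpos by auto
      have e2: "\<forall>\<^sub>F \<delta> in at_right 0. 0 < \<delta> \<and> \<delta> < t"
        unfolding eventually_at_right_field using t0 by (intro exI[of _ t]) auto
      from e1 e2 show ?thesis
      proof eventually_elim
        case (elim \<delta>)
        define X where "X = norm (u \<delta>)"
        define Ld where "Ld = p * Psi \<delta> / X powr p"
        have X: "X > 0" using elim by (simp add: X_def)
        have Ld1: "l1 \<le> Ld" using coercive_t[of \<delta>] elim X by (simp add: Ld_def X_def pos_le_divide_eq)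
        have Ld0: "Ld > 0" using Ld1 l1(2) by simp
        have Ldf: "Ld \<le> p * Jr f / X powr p" using Psi_le_f[OF Jf'] elim p X by (simp add: Ld_def divide_right_mono)
        have "h \<delta> = l1 * X powr k / (p * Jr f / X powr p)" using X by (simp add: h_def X_def)
        also have "\<dots> \<le> l1 * X powr k / Ld"
          using Ldf Ld0 l1(2) X Jfpos p by (intro divide_left_mono) (auto intro!: mult_pos_pos divide_pos_pos)
        also have "\<dots> = l1 * norm (u \<delta>) powr (p - 2) / rayleigh p J (u \<delta>)"
          by (simp add: rayleigh_def Ld_def X_def Psi_def Jr_def k_def)
        also have "\<dots> \<le> norm (W t) powr (p - 2)" using lower_final_gt2[OF p] elim by auto
        finally show ?case by (simp add: k_def)
      qed
    qed
    have "l1 * norm f powr k * norm f powr p / (p * Jr f) \<le> norm (W t) powr k"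
      by (rule tendsto_le[OF trivial_limit_at_right_real tendsto_const hlim ev])
    moreover have "l1 * norm f powr k * norm f powr p / (p * Jr f) = l1 * norm f powr k / Rf"
      using fpos by (simp add: Rf_def)
    ultimately show ?thesis using ray by (simp add: k_def)
  qed
qed

lemma eq2_final: assumes p: "p = 2"
  shows "(\<forall>s t. 0 \<le> s \<and> s \<le> t \<longrightarrow> norm (W t) \<le> norm (W s)) \<and> (\<forall>t\<ge>0. norm (W t) \<le> norm (W 0) \<and> norm (W 0) = norm f)"
proof -
  have fpos: "norm f > 0" using f by (simp add: H0_def)
  have lamE: "lamL = l1" unfolding lamL_def using p fpos by simp
  have Wn: "norm (W t) = norm (u t) * exp (l1 * t)" for t
    unfolding W_def a_fun_def lamE using p by (simp add: exp_minus inverse_eq_divide)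
  have mono: "norm (W t) \<le> norm (W s)" if st: "0 \<le> s" "s \<le> t" for s t
  proof -
    have "(norm (u t))^2 * exp (2*l1*t) \<le> (norm (u s))^2 * exp (2*l1* s)" by (rule upper_eq2[OF p st])
    moreover have "exp (2*l1*r) = (exp (l1 * r))^2" for r
      by (simp add: power2_eq_square exp_add[symmetric])
    ultimately have "(norm (W t))^2 \<le> (norm (W s))^2" by (simp add: Wn power_mult_distrib)
    then show ?thesis by (simp add: power_mono_iff)
  qed
  show ?thesis
  proof (intro conjI allI impI)
    fix s t :: real assume "0 \<le> s \<and> s \<le> t" then show "norm (W t) \<le> norm (W s)" using mono by auto
  next
    fix t :: real assume "0 \<le> t" then show "norm (W t) \<le> norm (W 0)" using mono[of 0 t] by auto
  next
    show "norm (W 0) = norm f" by (simp add: W0)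
  qed
qed

end



theorem lemma4:
  fixes J :: "'a::{real_inner, complete_space} \<Rightarrow> ereal"
    and p :: real and f :: 'a and u :: "real \<Rightarrow> 'a"
  assumes conv: "convex_fun J" and lsc: "lsc_fun J" and prp: "proper_fun J"
    and dense: "closure (dom_fun J) = UNIV"
    and hom: "abs_homogeneous p J"
    and coerc: "0 < lambda1 p J"
    and p2: "p \<ge> 2"
    and f: "f \<in> H0 J"
    and flow: "gradient_flow J f u"
  defines "lam \<equiv> real_of_ereal (lambda1 p J) * norm f powr (p - 2)"
  defines "w \<equiv> (\<lambda>t. (1 / a_fun p lam t) *\<^sub>R u t)"
  shows "(p > 2 \<longrightarrow>
           (\<forall>\<delta>>0. \<forall>t\<ge>\<delta>.
              real_of_ereal (lambda1 p J) * norm (u \<delta>) powr (p - 2) / rayleigh p J (u \<delta>)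
                \<le> norm (w t) powr (p - 2)
              \<and> norm (w t) powr (p - 2) \<le> norm f powr (p - 2))
         \<and> (J f < \<infinity> \<longrightarrow> (\<forall>t\<ge>0.
              real_of_ereal (lambda1 p J) * norm f powr (p - 2) / rayleigh p J f
                \<le> norm (w t) powr (p - 2)
              \<and> norm (w t) powr (p - 2) \<le> norm f powr (p - 2))))
       \<and> (p = 2 \<longrightarrow>
           (\<forall>s t. 0 \<le> s \<and> s \<le> t \<longrightarrow> norm (w t) \<le> norm (w s))
         \<and> (\<forall>t\<ge>0. norm (w t) \<le> norm (w 0) \<and> norm (w 0) = norm f))"
proof -
  interpret gf J p f u
    by (unfold_locales) (fact conv lsc prp hom coerc p2 f flow)+
  have lamE: "lam = lamL" by (simp add: lam_def lamL_def l1_def)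
  have wE: "w = W" by (rule ext) (simp add: w_def W_def lamE)
  have l1E: "real_of_ereal (lambda1 p J) = l1" by (simp add: l1_def)
  have up: "norm (W t) powr (p - 2) \<le> norm f powr (p - 2)" if "p > 2" "t \<ge> 0" for t
    using upper_final_gt2[OF that] that by (intro powr_mono2) auto
  have A: "p > 2 \<longrightarrow>
           (\<forall>\<delta>>0. \<forall>t\<ge>\<delta>.
              l1 * norm (u \<delta>) powr (p - 2) / rayleigh p J (u \<delta>) \<le> norm (W t) powr (p - 2)
              \<and> norm (W t) powr (p - 2) \<le> norm f powr (p - 2))
         \<and> (J f < \<infinity> \<longrightarrow> (\<forall>t\<ge>0.
              l1 * norm f powr (p - 2) / rayleigh p J f \<le> norm (W t) powr (p - 2)
              \<and> norm (W t) powr (p - 2) \<le> norm f powr (p - 2)))"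
    using lower_final_gt2 lower_final_0 up by auto
  have B: "p = 2 \<longrightarrow>
           (\<forall>s t. 0 \<le> s \<and> s \<le> t \<longrightarrow> norm (W t) \<le> norm (W s))
         \<and> (\<forall>t\<ge>0. norm (W t) \<le> norm (W 0) \<and> norm (W 0) = norm f)"
    using eq2_final by blast
  show ?thesis unfolding wE l1E using A B by blast
qed

end
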